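(* For integers $M\ge L>N\ge1$, the number of configurations of the four-vertex model on the $L\times M$ grid with scalar-product boundary conditions is $$Z_{L,M,N}=\prod_{j=1}^{N}\frac{(j-1)!\,(M-N+j)!}{(L-N+j-1)!\,(M-L+j)!},$$ which equals the number $\mathrm{PL}(N,L-N,M-L+1)$ of plane partitions fitting in an $N\times(L-N)\times(M-L+1)$ box, where $\mathrm{PL}(r,s,t)=\prod_{i=1}^r\prod_{j=1}^s\prod_{k=1}^t\frac{i+j+k-1}{i+j+k-2}$.
   Context: Four-vertex model: on the grid of vertices $(n,m)$, $1\le n\le L$, $1\le m\le M$ ($n$ increasing rightward, $m$ upward), every edge (including the boundary edges sticking out of the rectangle: $L$ vertical ones on the south and north sides, $M$ horizontal ones on the west and east sides) is thick or thin, such that at every vertex the four incident edges form one of four allowed local configurations: type $a$: all four edges thin; type $b$: both vertical edges thick, both horizontal edges thin; type $c$ (two kinds): south and east edges thick, west and north thin; or west and north edges thick, south and east thin. Scalar-product boundary conditions: the south boundary vertical edges in columns $1,\dots,N$ and the north boundary vertical edges in columns $L-N+1,\dots,L$ are thick; all other boundary edges are thin. *)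

theory Defs
  imports Complex_Main
begin

text \<open>A configuration is a pair (v, h) of edge states
 (True = thick).
 v n m : vertical edge in column n (1 \<le> n \<le> L) between rows m and m+1 (0 \<le> m \<le> M);
         m = 0 are the south boundary edges, m = M the north boundary edges.
 h n m : horizontal edge in row m (1 \<le> m \<le> M) between columns n and n+1 (0 \<le> n \<le> L);
         n = 0 are the west boundary edges, n = L the east boundary edges.
 Outside these index ranges the functions are required to be False (so that
 configurations correspond bijectively to edge colourings).\<close>

definition allowed_vertex :: "bool \<Rightarrow> bool \<Rightarrow> bool \<Rightarrow> bool \<Rightarrow> bool" where
  "allowed_vertex S N W E \<longleftrightarrow>
     (\<not> S \<and> \<not> N \<and> \<not> W \<and> \<not> E)     \<comment> \<open>type a\<close>
   \<or> (S \<and> N \<and> \<not> W \<and> \<not> E)          \<comment> \<open>type b\<close>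
   \<or> (S \<and> E \<and> \<not> W \<and> \<not> N)          \<comment> \<open>type c, first kind\<close>
   \<or> (W \<and> N \<and> \<not> S \<and> \<not> E)"         \<comment> \<open>type c, second kind\<close>

definition four_vertex_configs ::
  "nat \<Rightarrow> nat \<Rightarrow> nat \<Rightarrow> ((nat \<Rightarrow> nat \<Rightarrow> bool) \<times> (nat \<Rightarrow> nat \<Rightarrow> bool)) set" where
  "four_vertex_configs L M N = {(v, h).
     (\<forall>n m. v n m \<longrightarrow> 1 \<le> n \<and> n \<le> L \<and> m \<le> M) \<and>
     (\<forall>n m. h n m \<longrightarrow> n \<le> L \<and> 1 \<le> m \<and> m \<le> M) \<and>
     (\<forall>n\<in>{1..L}. \<forall>m\<in>{1..M}.
        allowed_vertex (v n (m - 1)) (v n m) (h (n - 1) m) (h n m)) \<and>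
     (\<forall>n\<in>{1..L}. v n 0 \<longleftrightarrow> n \<le> N) \<and>
     (\<forall>n\<in>{1..L}. v n M \<longleftrightarrow> L - N + 1 \<le> n) \<and>
     (\<forall>m\<in>{1..M}. \<not> h 0 m \<and> \<not> h L m)}"

definition Z4v :: "nat \<Rightarrow> nat \<Rightarrow> nat \<Rightarrow> nat" where
  "Z4v L M N = card (four_vertex_configs L M N)"

text \<open>Number of plane partitions in an r x s x t box (MacMahon).\<close>
definition PL :: "nat \<Rightarrow> nat \<Rightarrow> nat \<Rightarrow> real" where
  "PL r s t = (\<Prod>i=1..r. \<Prod>j=1..s. \<Prod>k=1..t.
      real (i + j + k - 1) / real (i + j + k - 2))"

end

theory Submission
  imports Defs "Jordan_Normal_Form.Determinant" "HOL-Library.FuncSet"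
begin


definition Cb :: "int \<Rightarrow> nat \<Rightarrow> real" where
  "Cb t j = (of_int t) gchoose j"

lemma Cb_0[simp]: "Cb t 0 = 1" by (simp add: Cb_def)

lemma Cb_pascal: "Cb (t + 1) (Suc j) = Cb t j + Cb t (Suc j)"
  unfolding Cb_def using gbinomial_Suc_Suc[of "of_int t :: real" j] by simp

lemma hockey_nat:
  "(\<Sum>t\<in>{a<..<a + int d + 1}. Cb (t + c) j) = Cb (a + int d + 1 + c) (Suc j) - Cb (a + 1 + c) (Suc j)"
proof (induction d)
  case 0
  have "{a<..<a + int 0 + 1} = {}" by auto
  then show ?case by simp
next
  case (Suc d)
  have eq: "{a<..<a + int (Suc d) + 1} = insert (a + int d + 1) {a<..<a + int d + 1}" by auto
  have "(\<Sum>t\<in>{a<..<a + int (Suc d) + 1}. Cb (t + c) j)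
      = Cb (a + int d + 1 + c) j + (\<Sum>t\<in>{a<..<a + int d + 1}. Cb (t + c) j)"
    unfolding eq by (subst sum.insert) (auto simp: add.assoc)
  also have "\<dots> = Cb (a + int d + 1 + c) j + Cb (a + int d + 1 + c) (Suc j) - Cb (a + 1 + c) (Suc j)"
    using Suc by simp
  also have "Cb (a + int d + 1 + c) j + Cb (a + int d + 1 + c) (Suc j) = Cb (a + int (Suc d) + 1 + c) (Suc j)"
    using Cb_pascal[of "a + int d + 1 + c" j] by (simp add: algebra_simps)
  finally show ?case .
qed

lemma hockey:
  assumes "a < b"
  shows "(\<Sum>t\<in>{a<..<b}. Cb (t + c) j) = Cb (b + c) (Suc j) - Cb (a + 1 + c) (Suc j)"
proof -
  define d where "d = nat (b - a - 1)"
  have d: "b = a + int d + 1" using assms unfolding d_def by simp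
  show ?thesis unfolding d by (rule hockey_nat)
qed

lemma sum_det_PiE:
  fixes F :: "nat \<Rightarrow> int \<Rightarrow> nat \<Rightarrow> real"
  assumes fin: "\<And>i. i < r \<Longrightarrow> finite (I i)"
  shows "(\<Sum>g\<in>PiE {0..<r} I. det (mat r r (\<lambda>(i,j). F i (g i) j)))
       = det (mat r r (\<lambda>(i,j). \<Sum>t\<in>I i. F i t j))"
proof -
  have fP: "finite (PiE {0..<r} I)" using fin by (intro finite_PiE) auto
  have "(\<Sum>g\<in>PiE {0..<r} I. det (mat r r (\<lambda>(i,j). F i (g i) j)))
     = (\<Sum>g\<in>PiE {0..<r} I. \<Sum>p\<in>{p. p permutes {0..<r}}. signof p * (\<Prod>i=0..<r. F i (g i) (p i)))"
  proof (rule sum.cong[OF refl])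
    fix g assume g: "g \<in> PiE {0..<r} I"
    show "det (mat r r (\<lambda>(i,j). F i (g i) j)) = (\<Sum>p\<in>{p. p permutes {0..<r}}. signof p * (\<Prod>i=0..<r. F i (g i) (p i)))"
      apply (subst det_def'[of _ r], simp)
      apply (rule sum.cong[OF refl])
      apply (rule arg_cong[where f="\<lambda>x. signof _ * x"])
      apply (rule prod.cong[OF refl])
      using permutes_in_image by fastforce
  qed
  also have "\<dots> = (\<Sum>p\<in>{p. p permutes {0..<r}}. \<Sum>g\<in>PiE {0..<r} I. signof p * (\<Prod>i=0..<r. F i (g i) (p i)))"
    by (rule sum.swap)
  also have "\<dots> = (\<Sum>p\<in>{p. p permutes {0..<r}}. signof p * (\<Prod>i=0..<r. \<Sum>t\<in>I i. F i t (p i)))"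
  proof (rule sum.cong[OF refl])
    fix p
    have "(\<Prod>i=0..<r. \<Sum>t\<in>I i. F i t (p i)) = (\<Sum>g\<in>PiE {0..<r} I. \<Prod>i=0..<r. F i (g i) (p i))"
      by (rule prod_sum_PiE) (use fin in auto)
    then show "(\<Sum>g\<in>PiE {0..<r} I. signof p * (\<Prod>i=0..<r. F i (g i) (p i))) = signof p * (\<Prod>i=0..<r. \<Sum>t\<in>I i. F i t (p i))"
      by (simp add: sum_distrib_left)
  qed
  also have "\<dots> = det (mat r r (\<lambda>(i,j). \<Sum>t\<in>I i. F i t j))"
    apply (subst det_def'[of _ r], simp)
    apply (rule sum.cong[OF refl])
    apply (rule arg_cong[where f="\<lambda>x. signof _ * x"])
    apply (rule prod.cong[OF refl])
    using permutes_in_image by fastforce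
  finally show ?thesis .
qed

lemma row_diff_det:
  fixes f :: "nat \<Rightarrow> nat \<Rightarrow> real"
  assumes f0: "\<And>i. f i 0 = 1"
  shows "det (mat (Suc r) (Suc r) (\<lambda>(i,j). f i j))
       = det (mat r r (\<lambda>(i,j). f (Suc i) (Suc j) - f i (Suc j)))"
proof -
  define A where "A = mat (Suc r) (Suc r) (\<lambda>(i,j). f i j)"
  define D :: "real mat" where "D = mat (Suc r) (Suc r) (\<lambda>(i,j). if i = j then 1 else if Suc j = i then -1 else 0)"
  have A: "A \<in> carrier_mat (Suc r) (Suc r)" unfolding A_def by simp
  have D: "D \<in> carrier_mat (Suc r) (Suc r)" unfolding D_def by simp
  have detD: "det D = 1"
  proof -
    have "det D = prod_list (diag_mat D)"
      by (rule det_lower_triangular[OF _ D]) (auto simp: D_def)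
    also have "\<dots> = 1" unfolding prod_list_diag_prod
      by (rule prod.neutral) (auto simp: D_def)
    finally show ?thesis .
  qed
  have DA: "(D * A) $$ (i,j) = (if i = 0 then f 0 j else f i j - f (i - 1) j)"
    if "i < Suc r" "j < Suc r" for i j
  proof -
    have "(D * A) $$ (i,j) = (\<Sum>k<Suc r. D $$ (i,k) * A $$ (k,j))"
      using that A D by (simp add: scalar_prod_def lessThan_atLeast0 sum.reindex)
    also have "\<dots> = (\<Sum>k<Suc r. (if k = i then f i j else if Suc k = i then - f k j else 0))"
      by (rule sum.cong[OF refl]) (use that in \<open>auto simp: D_def A_def\<close>)
    also have "\<dots> = (if i = 0 then f 0 j else f i j - f (i - 1) j)"
    proof (cases i)
      case 0
      have "\<And>k. (if k = i then f i j else if Suc k = i then - f k j else 0) = (if k = 0 then f 0 j else 0)"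
        using 0 by auto
      then show ?thesis using 0 by (simp only: sum.delta) simp
    next
      case (Suc i')
      have "(\<Sum>k<Suc r. (if k = i then f i j else if Suc k = i then - f k j else 0))
          = (\<Sum>k<Suc r. (if k = i then f i j else 0)) + (\<Sum>k<Suc r. (if k = i' then - f k j else 0))"
        by (subst sum.distrib[symmetric], rule sum.cong) (auto simp: Suc)
      then show ?thesis using that Suc by (simp add: sum.delta)
    qed
    finally show ?thesis .
  qed
  have DAc: "D * A \<in> carrier_mat (Suc r) (Suc r)" using A D by simp
  have "det A = det (D * A)" using det_mult[OF D A] detD by simp
  also have "\<dots> = (\<Sum>i<Suc r. (D * A) $$ (i,0) * cofactor (D * A) i 0)"
    by (rule laplace_expansion_column[OF DAc]) simp
  also have "\<dots> = (\<Sum>i<Suc r. (if i = 0 then cofactor (D * A) 0 0 else 0))"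
    by (rule sum.cong[OF refl]) (auto simp: DA f0)
  also have "\<dots> = cofactor (D * A) 0 0" by (simp add: sum.delta)
  also have "\<dots> = det (mat_delete (D * A) 0 0)" by (simp add: cofactor_def)
  also have "mat_delete (D * A) 0 0 = mat r r (\<lambda>(i,j). f (Suc i) (Suc j) - f i (Suc j))"
  proof -
    have dD: "dim_row D = Suc r" and dA: "dim_col A = Suc r" using A D by auto
    show ?thesis
    proof (rule eq_matI)
      fix i j assume ij: "i < dim_row (mat r r (\<lambda>(i,j). f (Suc i) (Suc j) - f i (Suc j)))"
          "j < dim_col (mat r r (\<lambda>(i,j). f (Suc i) (Suc j) - f i (Suc j)))"
      then have "i < r" "j < r" by auto
      have e: "(D * A) $$ (Suc i, Suc j) = f (Suc i) (Suc j) - f i (Suc j)"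
        using DA[of "Suc i" "Suc j"] \<open>i < r\<close> \<open>j < r\<close> by simp
      show "mat_delete (D * A) 0 0 $$ (i, j) = mat r r (\<lambda>(i,j). f (Suc i) (Suc j) - f i (Suc j)) $$ (i, j)"
        unfolding mat_delete_def using \<open>i < r\<close> \<open>j < r\<close> dD dA
        by (simp add: insert_index_def e)
    qed (auto simp: mat_delete_def dD dA)
  qed
  finally show ?thesis unfolding A_def .
qed

definition box :: "int list \<Rightarrow> int list set" where
  "box x = {y. length y + 1 = length x \<and> (\<forall>i<length y. x!i < y!i \<and> y!i < x!Suc i)}"

primrec Gn :: "nat \<Rightarrow> int list \<Rightarrow> nat" where
  "Gn 0 x = 1"
| "Gn (Suc n) x = (\<Sum>y\<in>box x. Gn n y)"

definition G :: "int list \<Rightarrow> nat" where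
  "G x = Gn (length x) x"

lemma box_finite: "finite (box x)"
proof -
  define B where "B = sum_list (map abs x)"
  have xb: "\<bar>x!k\<bar> \<le> B" if "k < length x" for k
  proof -
    have "\<bar>x!k\<bar> \<in> set (map abs x)" using that by auto
    then show ?thesis unfolding B_def by (rule member_le_sum_list) auto
  qed
  have "box x \<subseteq> {y. set y \<subseteq> {-B..B} \<and> length y = length x - 1}"
  proof
    fix y assume y: "y \<in> box x"
    then have l: "length y + 1 = length x" and iv: "\<And>i. i < length y \<Longrightarrow> x!i < y!i \<and> y!i < x!Suc i"
      unfolding box_def by auto
    have "y!i \<in> {-B..B}" if "i < length y" for i
      using iv[OF that] xb[of i] xb[of "Suc i"] that l by auto
    then show "y \<in> {y. set y \<subseteq> {-B..B} \<and> length y = length x - 1}"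
      using l by (auto simp: in_set_conv_nth)
  qed
  moreover have "finite {y. set y \<subseteq> {-B..B} \<and> length y = length x - 1}"
    by (rule finite_lists_length_eq) simp
  ultimately show ?thesis by (rule finite_subset)
qed

lemma box_length: "y \<in> box x \<Longrightarrow> length y + 1 = length x"
  unfolding box_def by auto

lemma G_Nil[simp]: "G [] = 1" by (simp add: G_def)

lemma G_rec: "x \<noteq> [] \<Longrightarrow> G x = (\<Sum>y\<in>box x. G y)"
proof -
  assume "x \<noteq> []"
  then obtain n where n: "length x = Suc n" by (cases x) auto
  have "G x = (\<Sum>y\<in>box x. Gn n y)" unfolding G_def n by simp
  also have "\<dots> = (\<Sum>y\<in>box x. G y)"
    by (rule sum.cong[OF refl]) (use n box_length in \<open>fastforce simp: G_def\<close>)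
  finally show ?thesis .
qed

lemma box_sorted:
  assumes "y \<in> box x"
  shows "sorted_wrt (<) y"
proof -
  have l: "length y + 1 = length x" and iv: "\<And>i. i < length y \<Longrightarrow> x!i < y!i \<and> y!i < x!Suc i"
    using assms unfolding box_def by auto
  show ?thesis unfolding sorted_wrt_iff_nth_less
  proof (intro allI impI)
    fix i j assume "i < j" "j < length y"
    then have "y!i < x!Suc i" "x!j < y!j" using iv by auto
    moreover have "x!Suc i \<le> x!j"
    proof -
      have "\<forall>k. Suc i + k \<le> j \<longrightarrow> x!Suc i \<le> x!(Suc i + k)"
      proof
        fix k show "Suc i + k \<le> j \<longrightarrow> x!Suc i \<le> x!(Suc i + k)"
        proof (induct k)
          case (Suc k)
          then show ?case
          proof (intro impI)
            assume a: "Suc i + Suc k \<le> j"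
            then have "Suc i + k < length y" using \<open>j < length y\<close> by simp
            from iv[OF this] have "x!(Suc i + k) < x!(Suc i + Suc k)" by simp
            with Suc a show "x!Suc i \<le> x!(Suc i + Suc k)" by simp
          qed
        qed simp
      qed
      then show ?thesis using \<open>i < j\<close> by (metis le_add_diff_inverse Suc_leI order_refl)
    qed
    ultimately show "y!i < y!j" by simp
  qed
qed

definition Alt :: "int list \<Rightarrow> real" where
  "Alt x = det (mat (length x) (length x) (\<lambda>(i,j). Cb (x!i - int i + int (length x)) j))"

lemma sum_box_PiE:
  assumes l: "length x = Suc r"
  shows "(\<Sum>y\<in>box x. h y) = (\<Sum>g\<in>PiE {0..<r} (\<lambda>i. {x!i<..<x!Suc i}). h (map g [0..<r]))"
proof (rule sum.reindex_bij_witness[where i="\<lambda>g. map g [0..<r]" and j="\<lambda>y. restrict (\<lambda>i. y!i) {0..<r}"])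
  fix y assume y: "y \<in> box x"
  then have ly: "length y = r" using l box_length by fastforce
  show mp: "map (restrict (\<lambda>i. y!i) {0..<r}) [0..<r] = y"
    by (rule nth_equalityI) (auto simp: ly)
  from mp show "h (map (restrict (\<lambda>i. y!i) {0..<r}) [0..<r]) = h y" by simp
  show "restrict (\<lambda>i. y!i) {0..<r} \<in> PiE {0..<r} (\<lambda>i. {x!i<..<x!Suc i})"
    using y ly unfolding box_def by auto
next
  fix g assume g: "g \<in> PiE {0..<r} (\<lambda>i. {x!i<..<x!Suc i})"
  show "restrict (\<lambda>i. map g [0..<r] ! i) {0..<r} = g"
    using g by (auto simp: restrict_def PiE_def extensional_def fun_eq_iff)
  show "map g [0..<r] \<in> box x"
    using g l unfolding box_def by (auto simp: PiE_def Pi_def)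
qed

lemma G_Alt:
  assumes "sorted_wrt (<) x"
  shows "real (G x) = Alt x"
  using assms
proof (induction "length x" arbitrary: x)
  case 0
  then show ?case by (simp add: Alt_def)
next
  case (Suc r x)
  have l: "length x = Suc r" using Suc.hyps(2) by simp
  have xs: "x!i < x!Suc i" if "i < r" for i
    using Suc.prems l that by (simp add: sorted_wrt_iff_nth_less)
  have "real (G x) = (\<Sum>y\<in>box x. real (G y))"
    using l G_rec[of x] by (cases x) auto
  also have "\<dots> = (\<Sum>y\<in>box x. Alt y)"
  proof (rule sum.cong[OF refl])
    fix y assume y: "y \<in> box x"
    then have "length y = r" using l box_length by fastforce
    then show "real (G y) = Alt y" using Suc.hyps(1) box_sorted[OF y] by simp
  qed
  also have "\<dots> = (\<Sum>g\<in>PiE {0..<r} (\<lambda>i. {x!i<..<x!Suc i}). Alt (map g [0..<r]))"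
    by (rule sum_box_PiE[OF l])
  also have "\<dots> = (\<Sum>g\<in>PiE {0..<r} (\<lambda>i. {x!i<..<x!Suc i}).
       det (mat r r (\<lambda>(i,j). (\<lambda>i t j. Cb (t - int i + int r) j) i (g i) j)))"
    by (rule sum.cong[OF refl]) (auto simp: Alt_def intro!: arg_cong[where f=det])
  also have "\<dots> = det (mat r r (\<lambda>(i,j). \<Sum>t\<in>{x!i<..<x!Suc i}. Cb (t - int i + int r) j))"
    by (rule sum_det_PiE) simp
  also have "\<dots> = det (mat r r (\<lambda>(i,j). Cb (x!Suc i - int (Suc i) + int (Suc r)) (Suc j)
                                  - Cb (x!i - int i + int (Suc r)) (Suc j)))"
  proof (rule arg_cong[where f=det], rule eq_matI)
    fix i j assume ij: "i < dim_row (mat r r (\<lambda>(i,j). Cb (x!Suc i - int (Suc i) + int (Suc r)) (Suc j)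
                                  - Cb (x!i - int i + int (Suc r)) (Suc j)))"
      "j < dim_col (mat r r (\<lambda>(i,j). Cb (x!Suc i - int (Suc i) + int (Suc r)) (Suc j)
                                  - Cb (x!i - int i + int (Suc r)) (Suc j)))"
    then have i: "i < r" and j: "j < r" by auto
    have "(\<Sum>t\<in>{x!i<..<x!Suc i}. Cb (t - int i + int r) j) = (\<Sum>t\<in>{x!i<..<x!Suc i}. Cb (t + (int r - int i)) j)"
      by (simp add: algebra_simps)
    also have "\<dots> = Cb (x!Suc i + (int r - int i)) (Suc j) - Cb (x!i + 1 + (int r - int i)) (Suc j)"
      by (rule hockey[OF xs[OF i]])
    also have "\<dots> = Cb (x!Suc i - int (Suc i) + int (Suc r)) (Suc j) - Cb (x!i - int i + int (Suc r)) (Suc j)"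
      by (simp add: algebra_simps)
    finally show "mat r r (\<lambda>(i,j). \<Sum>t\<in>{x!i<..<x!Suc i}. Cb (t - int i + int r) j) $$ (i,j)
      = mat r r (\<lambda>(i,j). Cb (x!Suc i - int (Suc i) + int (Suc r)) (Suc j)
                                  - Cb (x!i - int i + int (Suc r)) (Suc j)) $$ (i,j)"
      using i j by simp
  qed auto
  also have "\<dots> = Alt x"
  proof -
    have "det (mat (Suc r) (Suc r) (\<lambda>(i,j). Cb (x!i - int i + int (Suc r)) j)) = det (mat r r (\<lambda>(i,j). Cb (x!Suc i - int (Suc i) + int (Suc r)) (Suc j) - Cb (x!i - int i + int (Suc r)) (Suc j)))"
      by (rule row_diff_det) simp
    then show ?thesis unfolding Alt_def l by simp
  qed
  finally show ?case .
qed

lemma det_col_scale: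
  fixes A :: "nat \<Rightarrow> nat \<Rightarrow> real"
  shows "det (mat r r (\<lambda>(i,j). c j * A i j)) = (\<Prod>j<r. c j) * det (mat r r (\<lambda>(i,j). A i j))"
proof -
  have "det (mat r r (\<lambda>(i,j). c j * A i j))
      = (\<Sum>p\<in>{p. p permutes {0..<r}}. signof p * (\<Prod>i=0..<r. c (p i) * A i (p i)))"
    apply (subst det_def'[of _ r], simp)
    apply (rule sum.cong[OF refl])
    apply (rule arg_cong[where f="\<lambda>x. signof _ * x"])
    apply (rule prod.cong[OF refl])
    using permutes_in_image by fastforce
  also have "\<dots> = (\<Sum>p\<in>{p. p permutes {0..<r}}. (\<Prod>j<r. c j) * (signof p * (\<Prod>i=0..<r. A i (p i))))"
  proof (rule sum.cong[OF refl])
    fix p assume "p \<in> {p. p permutes {0..<r}}"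
    then have bp: "bij_betw p {0..<r} {0..<r}" by (simp add: permutes_imp_bij)
    have "(\<Prod>i=0..<r. c (p i)) = (\<Prod>j=0..<r. c j)" by (rule prod.reindex_bij_betw[OF bp])
    then show "signof p * (\<Prod>i=0..<r. c (p i) * A i (p i)) = (\<Prod>j<r. c j) * (signof p * (\<Prod>i=0..<r. A i (p i)))"
      by (simp add: prod.distrib atLeast0LessThan)
  qed
  also have "\<dots> = (\<Prod>j<r. c j) * det (mat r r (\<lambda>(i,j). A i j))"
    apply (subst det_def'[of _ r], simp)
    apply (subst sum_distrib_left)
    apply (rule sum.cong[OF refl])
    apply (rule arg_cong[where f="\<lambda>x. _ * (signof _ * x)"])
    apply (rule prod.cong[OF refl])
    using permutes_in_image by fastforce
  finally show ?thesis .
qed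

lemma det_monic_basis:
  fixes q :: "nat \<Rightarrow> real poly" and y :: "nat \<Rightarrow> real"
  assumes dq: "\<And>j. j < r \<Longrightarrow> degree (q j) = j" and cq: "\<And>j. j < r \<Longrightarrow> coeff (q j) j = 1"
  shows "det (mat r r (\<lambda>(i,j). poly (q j) (y i))) = det (mat r r (\<lambda>(i,j). y i ^ j))"
proof -
  define V where "V = mat r r (\<lambda>(i,k). y i ^ k)"
  define Cm where "Cm = mat r r (\<lambda>(k,j). coeff (q j) k)"
  have V: "V \<in> carrier_mat r r" and Cm: "Cm \<in> carrier_mat r r" unfolding V_def Cm_def by auto
  have prod: "V * Cm = mat r r (\<lambda>(i,j). poly (q j) (y i))"
  proof (rule eq_matI)
    fix i j assume "i < dim_row (mat r r (\<lambda>(i,j). poly (q j) (y i)))" "j < dim_col (mat r r (\<lambda>(i,j). poly (q j) (y i)))"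
    then have i: "i < r" and j: "j < r" by auto
    have "(V * Cm) $$ (i,j) = (\<Sum>k\<in>{0..<r}. y i ^ k * coeff (q j) k)"
      using i j V Cm by (simp add: V_def Cm_def scalar_prod_def)
    also have "\<dots> = (\<Sum>k\<le>degree (q j). coeff (q j) k * y i ^ k)"
    proof (rule sum.mono_neutral_cong_left[symmetric])
      show "{..degree (q j)} \<subseteq> {0..<r}" using dq[OF j] j by auto
      show "\<forall>k\<in>{0..<r} - {..degree (q j)}. y i ^ k * coeff (q j) k = 0"
        by (auto simp: coeff_eq_0)
    qed (auto simp: mult.commute)
    also have "\<dots> = poly (q j) (y i)" by (simp add: poly_altdef)
    finally show "(V * Cm) $$ (i,j) = mat r r (\<lambda>(i,j). poly (q j) (y i)) $$ (i,j)" using i j by simp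
  qed (auto simp: V_def Cm_def)
  have dC: "det Cm = 1"
  proof -
    have "det Cm = prod_list (diag_mat Cm)"
      by (rule det_upper_triangular[OF _ Cm]) (auto simp: Cm_def coeff_eq_0 dq)
    also have "\<dots> = 1" unfolding prod_list_diag_prod
      by (rule prod.neutral) (auto simp: Cm_def cq)
    finally show ?thesis .
  qed
  show ?thesis using det_mult[OF V Cm] dC prod by (simp add: V_def)
qed

lemma monic_lin_prod:
  fixes a :: "nat \<Rightarrow> real"
  shows "degree (\<Prod>k<j. [:- a k, 1:]) = j \<and> coeff (\<Prod>k<j. [:- a k, 1:]) j = 1"
proof (induct j)
  case 0
  then show ?case by simp
next
  case (Suc j)
  let ?p = "\<Prod>k<j. [:- a k, 1:]"
  have nz: "?p \<noteq> 0" using Suc by auto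
  have e: "(\<Prod>k<Suc j. [:- a k, 1:]) = ?p * [:- a j, 1:]" by simp
  have d: "degree (?p * [:- a j, 1:]) = Suc j" using Suc nz by (subst degree_mult_eq) auto
  have l1: "lead_coeff ?p = 1" using Suc by simp
  have l2: "lead_coeff [:- a j, 1:] = 1" by simp
  have "lead_coeff (?p * [:- a j, 1:]) = 1" by (simp only: lead_coeff_mult l1 l2)
  then show ?case unfolding e using d by simp
qed

lemma vandermonde_newton:
  fixes y :: "nat \<Rightarrow> real"
  shows "det (mat r r (\<lambda>(i,j). y i ^ j)) = (\<Prod>i<r. \<Prod>k<i. (y i - y k))"
proof -
  define q where "q j = (\<Prod>k<j. [:- y k, 1:])" for j
  have "det (mat r r (\<lambda>(i,j). y i ^ j)) = det (mat r r (\<lambda>(i,j). poly (q j) (y i)))"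
    by (rule det_monic_basis[symmetric]) (use monic_lin_prod in \<open>auto simp: q_def\<close>)
  also have "\<dots> = prod_list (diag_mat (mat r r (\<lambda>(i,j). poly (q j) (y i))))"
  proof (rule det_lower_triangular)
    fix i j assume "i < j" "j < r"
    then show "mat r r (\<lambda>(i,j). poly (q j) (y i)) $$ (i,j) = 0"
      by (auto simp: q_def poly_prod intro!: prod_zero bexI[of _ i])
  qed auto
  also have "\<dots> = (\<Prod>i<r. \<Prod>k<i. (y i - y k))"
    unfolding prod_list_diag_prod by (simp add: q_def poly_prod atLeast0LessThan)
  finally show ?thesis .
qed

lemma Cb_poly: "Cb t j = poly (\<Prod>k<j. [:- of_nat k, 1:]) (of_int t) / fact j"
  unfolding Cb_def gbinomial_prod_rev by (simp add: poly_prod atLeast0LessThan)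

lemma vandermonde_Cb:
  fixes X :: "nat \<Rightarrow> int"
  shows "det (mat r r (\<lambda>(i,j). Cb (X i) j)) = (\<Prod>i<r. \<Prod>k<i. of_int (X i - X k)) / (\<Prod>j<r. fact j)"
proof -
  have "det (mat r r (\<lambda>(i,j). Cb (X i) j))
      = det (mat r r (\<lambda>(i,j). (1 / fact j) * poly (\<Prod>k<j. [:- of_nat k, 1:]) (of_int (X i))))"
    by (rule arg_cong[where f=det], rule eq_matI) (auto simp: Cb_poly)
  also have "\<dots> = (\<Prod>j<r. 1 / fact j) * det (mat r r (\<lambda>(i,j). poly (\<Prod>k<j. [:- of_nat k, 1:]) (real_of_int (X i))))"
    by (rule det_col_scale)
  also have "det (mat r r (\<lambda>(i,j). poly (\<Prod>k<j. [:- of_nat k, 1:]) (real_of_int (X i))))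
     = det (mat r r (\<lambda>(i,j). (real_of_int (X i)) ^ j))"
    by (rule det_monic_basis) (use monic_lin_prod[of "of_nat"] in auto)
  also have "\<dots> = (\<Prod>i<r. \<Prod>k<i. (real_of_int (X i) - real_of_int (X k)))"
    by (rule vandermonde_newton)
  finally show ?thesis by (simp add: prod_dividef)
qed

lemma G_formula:
  assumes "sorted_wrt (<) x"
  shows "real (G x) = (\<Prod>i<length x. \<Prod>k<i. of_int ((x!i - int i) - (x!k - int k))) / (\<Prod>j<length x. fact j)"
proof -
  have "real (G x) = Alt x" by (rule G_Alt[OF assms])
  also have "\<dots> = (\<Prod>i<length x. \<Prod>k<i. of_int ((x!i - int i + int (length x)) - (x!k - int k + int (length x)))) / (\<Prod>j<length x. fact j)"
    unfolding Alt_def by (rule vandermonde_Cb)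
  finally show ?thesis by simp
qed


lemma box_Cons_Cons:
  "box (a # b # z) = {y0 # w | y0 w. a < y0 \<and> y0 < b \<and> w \<in> box (b # z)}"
proof (rule Set.set_eqI, rule iffI)
  fix y assume y: "y \<in> box (a # b # z)"
  then have l: "length y = Suc (length z)" and iv: "\<And>i. i < length y \<Longrightarrow> (a#b#z)!i < y!i \<and> y!i < (a#b#z)!Suc i"
    unfolding box_def by auto
  then obtain y0 w where yw: "y = y0 # w" by (cases y) auto
  have "a < y0 \<and> y0 < b" using iv[of 0] yw by simp
  moreover have "w \<in> box (b # z)"
    unfolding box_def using l iv yw by (auto, metis Suc_less_eq length_Cons nth_Cons_Suc)+
  ultimately show "y \<in> {y0 # w | y0 w. a < y0 \<and> y0 < b \<and> w \<in> box (b # z)}" using yw by auto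
next
  fix y assume "y \<in> {y0 # w | y0 w. a < y0 \<and> y0 < b \<and> w \<in> box (b # z)}"
  then obtain y0 w where yw: "y = y0 # w" and h: "a < y0" "y0 < b" "w \<in> box (b # z)" by auto
  then have l: "length w = length z" and iv: "\<And>i. i < length w \<Longrightarrow> (b#z)!i < w!i \<and> w!i < (b#z)!Suc i"
    unfolding box_def by auto
  show "y \<in> box (a # b # z)"
    unfolding box_def yw
  proof (intro CollectI conjI allI impI)
    show "length (y0 # w) + 1 = length (a # b # z)" using l by simp
    fix i assume "i < length (y0 # w)"
    then show "(a # b # z) ! i < (y0 # w) ! i" "(y0 # w) ! i < (a # b # z) ! Suc i"
      using h iv[of "i - 1"] by (cases i; auto)+
  qed
qed

lemma box_Cons2:
  "box (a # (a + 2) # z) = (\<lambda>w. (a + 1) # w) ` box ((a + 2) # z)"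
proof -
  have "\<And>y0. (a < y0 \<and> y0 < a + 2) = (y0 = a + 1)" by auto
  then show ?thesis unfolding box_Cons_Cons by auto
qed

lemma box_front:
  "box (map (\<lambda>i. c + 2 * int i) [0..<Suc s] @ z)
   = (\<lambda>w. map (\<lambda>i. c + 1 + 2 * int i) [0..<s] @ w) ` box ((c + 2 * int s) # z)"
proof (induction s arbitrary: c)
  case 0
  then show ?case by simp
next
  case (Suc s)
  have e1: "map (\<lambda>i. c + 2 * int i) [0..<Suc (Suc s)] = c # map (\<lambda>i. (c + 2) + 2 * int i) [0..<Suc s]"
    by (subst upt_conv_Cons) (auto simp: map_Suc_upt[symmetric] algebra_simps simp del: upt_Suc)
  have e2: "map (\<lambda>i. c + 1 + 2 * int i) [0..<Suc s] = (c + 1) # map (\<lambda>i. (c + 2) + 1 + 2 * int i) [0..<s]"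
    by (subst upt_conv_Cons) (auto simp: map_Suc_upt[symmetric] algebra_simps simp del: upt_Suc)
  have e3: "map (\<lambda>i. (c + 2) + 2 * int i) [0..<Suc s] = (c + 2) # map (\<lambda>i. (c + 4) + 2 * int i) [0..<s]"
    by (subst upt_conv_Cons) (auto simp: map_Suc_upt[symmetric] algebra_simps simp del: upt_Suc)
  have "box (map (\<lambda>i. c + 2 * int i) [0..<Suc (Suc s)] @ z)
      = box (c # (c + 2) # (map (\<lambda>i. (c + 4) + 2 * int i) [0..<s] @ z))"
    unfolding e1 e3 by simp
  also have "\<dots> = (\<lambda>w. (c + 1) # w) ` box ((c + 2) # (map (\<lambda>i. (c + 4) + 2 * int i) [0..<s] @ z))"
    by (rule box_Cons2)
  also have "(c + 2) # (map (\<lambda>i. (c + 4) + 2 * int i) [0..<s] @ z) = map (\<lambda>i. (c + 2) + 2 * int i) [0..<Suc s] @ z"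
    unfolding e3 by simp
  also have "box \<dots> = (\<lambda>w. map (\<lambda>i. (c + 2) + 1 + 2 * int i) [0..<s] @ w) ` box ((c + 2 + 2 * int s) # z)"
    by (rule Suc.IH)
  finally show ?case unfolding e2 by (simp add: image_image algebra_simps)
qed

lemma box_snoc_snoc:
  "box (x @ [a, b]) = {w @ [y] | w y. w \<in> box (x @ [a]) \<and> a < y \<and> y < b}"
proof (rule Set.set_eqI, rule iffI)
  fix Y assume Y: "Y \<in> box (x @ [a, b])"
  then have l: "length Y = Suc (length x)" and iv: "\<And>i. i < length Y \<Longrightarrow> (x @ [a, b])!i < Y!i \<and> Y!i < (x @ [a, b])!Suc i"
    unfolding box_def by auto
  then obtain w y where Yw: "Y = w @ [y]" by (metis append_butlast_last_id length_0_conv nat.distinct(1))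
  have lw: "length w = length x" using l Yw by simp
  have "a < y \<and> y < b" using iv[of "length x"] Yw lw by (simp add: nth_append)
  moreover have "w \<in> box (x @ [a])"
    unfolding box_def
  proof (intro CollectI conjI allI impI)
    show "length w + 1 = length (x @ [a])" using lw by simp
    fix i assume i: "i < length w"
    have "(x @ [a, b])!i < Y!i \<and> Y!i < (x @ [a, b])!Suc i" using iv[of i] i l lw by simp
    then show "(x @ [a])!i < w!i" "w!i < (x @ [a])!Suc i"
      using i lw Yw by (auto simp: nth_append split: if_splits)
  qed
  ultimately show "Y \<in> {w @ [y] | w y. w \<in> box (x @ [a]) \<and> a < y \<and> y < b}" using Yw by auto
next
  fix Y assume "Y \<in> {w @ [y] | w y. w \<in> box (x @ [a]) \<and> a < y \<and> y < b}"
  then obtain w y where Yw: "Y = w @ [y]" and h: "w \<in> box (x @ [a])" "a < y" "y < b" by auto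
  then have lw: "length w = length x" and iv: "\<And>i. i < length w \<Longrightarrow> (x @ [a])!i < w!i \<and> w!i < (x @ [a])!Suc i"
    unfolding box_def by auto
  show "Y \<in> box (x @ [a, b])"
    unfolding box_def
  proof (intro CollectI conjI allI impI)
    show "length Y + 1 = length (x @ [a, b])" using lw Yw by simp
    fix i assume i: "i < length Y"
    show "(x @ [a, b])!i < Y!i" "Y!i < (x @ [a, b])!Suc i"
    proof -
      consider "i < length x" | "i = length x" using i Yw lw by fastforce
      then have "(x @ [a, b])!i < Y!i \<and> Y!i < (x @ [a, b])!Suc i"
      proof cases
        case 1
        then show ?thesis using iv[of i] lw Yw by (auto simp: nth_append split: if_splits)
      next
        case 2
        then show ?thesis using h lw Yw by (simp add: nth_append)
      qed
      then show "(x @ [a, b])!i < Y!i" "Y!i < (x @ [a, b])!Suc i" by auto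
    qed
  qed
qed

lemma box_snoc2:
  "box (x @ [a, a + 2]) = (\<lambda>w. w @ [a + 1]) ` box (x @ [a])"
proof -
  have "\<And>y. (a < y \<and> y < a + 2) = (y = a + 1)" by auto
  then show ?thesis unfolding box_snoc_snoc by auto
qed

lemma box_back:
  "box (z @ map (\<lambda>k. d + 2 * int k) [0..<Suc t])
   = (\<lambda>w. w @ map (\<lambda>k. d + 1 + 2 * int k) [0..<t]) ` box (z @ [d])"
proof (induction t)
  case 0
  then show ?case by simp
next
  case (Suc t)
  have eq: "z @ map (\<lambda>k. d + 2 * int k) [0..<Suc (Suc t)] = (z @ map (\<lambda>k. d + 2 * int k) [0..<t]) @ [d + 2 * int t, (d + 2 * int t) + 2]"
    by (simp add: algebra_simps)
  have "box (z @ map (\<lambda>k. d + 2 * int k) [0..<Suc (Suc t)])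
     = (\<lambda>w. w @ [d + 2 * int t + 1]) ` box ((z @ map (\<lambda>k. d + 2 * int k) [0..<t]) @ [d + 2 * int t])"
    unfolding eq by (rule box_snoc2)
  also have "(z @ map (\<lambda>k. d + 2 * int k) [0..<t]) @ [d + 2 * int t] = z @ map (\<lambda>k. d + 2 * int k) [0..<Suc t]"
    by simp
  also note Suc.IH
  finally show ?case by (simp add: image_image algebra_simps)
qed

definition extl :: "nat \<Rightarrow> nat \<Rightarrow> nat \<Rightarrow> nat \<Rightarrow> int list \<Rightarrow> int list" where
  "extl N K M n a = (if n \<le> N then [0] else []) @ a @ (if n \<le> K then [int M + 1] else [])"

definition ext2 :: "nat \<Rightarrow> nat \<Rightarrow> nat \<Rightarrow> nat \<Rightarrow> int list \<Rightarrow> int list" where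
  "ext2 N K M n a = (if n \<le> N then [int (N - n)] else []) @ a @ (if n \<le> K then [int M - int (K - n) + 1] else [])"

definition Uv :: "nat \<Rightarrow> nat \<Rightarrow> int list" where
  "Uv N n = map (\<lambda>i. 2 * int i - int (N - n) + 1) [0..<N - n]"

definition Vv :: "nat \<Rightarrow> nat \<Rightarrow> nat \<Rightarrow> int list" where
  "Vv K M n = map (\<lambda>k. int M - int (K - n) + 2 + 2 * int k) [0..<K - n]"

definition Pv :: "nat \<Rightarrow> nat \<Rightarrow> nat \<Rightarrow> nat \<Rightarrow> int list \<Rightarrow> int list" where
  "Pv N K M n a = Uv N n @ a @ Vv K M n"

lemma length_Uv[simp]: "length (Uv N n) = N - n" by (simp add: Uv_def)
lemma length_Vv[simp]: "length (Vv K M n) = K - n" by (simp add: Vv_def)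

lemma front_part:
  "box (Uv N n @ z) = (\<lambda>w. Uv N (Suc n) @ w) ` box ((if Suc n \<le> N then [int (N - Suc n)] else []) @ z)"
proof (cases "n < N")
  case True
  define s where "s = N - Suc n"
  have Ns: "N - n = Suc s" using True unfolding s_def by simp
  have U1: "Uv N n = map (\<lambda>i. (- int s) + 2 * int i) [0..<Suc s]"
    unfolding Uv_def Ns by (simp add: algebra_simps)
  have U2: "Uv N (Suc n) = map (\<lambda>i. (- int s) + 1 + 2 * int i) [0..<s]"
    unfolding Uv_def s_def by (simp add: algebra_simps)
  show ?thesis unfolding U1 U2 box_front using True by (simp add: s_def of_nat_diff algebra_simps)
next
  case False
  then have "Uv N n = []" "Uv N (Suc n) = []" by (auto simp: Uv_def)
  then show ?thesis using False by simp
qed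

lemma back_part:
  "box (z @ Vv K M n) = (\<lambda>w. w @ Vv K M (Suc n)) ` box (z @ (if Suc n \<le> K then [int M - int (K - Suc n) + 1] else []))"
proof (cases "n < K")
  case True
  define t where "t = K - Suc n"
  have Kt: "K - n = Suc t" using True unfolding t_def by simp
  have V1: "Vv K M n = map (\<lambda>k. (int M - int t + 1) + 2 * int k) [0..<Suc t]"
    unfolding Vv_def Kt by (simp add: algebra_simps)
  have V2: "Vv K M (Suc n) = map (\<lambda>k. (int M - int t + 1) + 1 + 2 * int k) [0..<t]"
    unfolding Vv_def t_def by (simp add: algebra_simps)
  show ?thesis unfolding V1 V2 box_back using True by (simp add: t_def)
next
  case False
  then have "Vv K M n = []" "Vv K M (Suc n) = []" by (auto simp: Vv_def)
  then show ?thesis using False by simp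
qed

lemma box_Pv:
  "box (Pv N K M n a) = (\<lambda>w. Pv N K M (Suc n) w) ` box (ext2 N K M (Suc n) a)"
proof -
  have "box (Pv N K M n a) = (\<lambda>w. Uv N (Suc n) @ w) ` box ((if Suc n \<le> N then [int (N - Suc n)] else []) @ a @ Vv K M n)"
    unfolding Pv_def by (rule front_part)
  also have "box ((if Suc n \<le> N then [int (N - Suc n)] else []) @ a @ Vv K M n)
     = (\<lambda>w. w @ Vv K M (Suc n)) ` box (((if Suc n \<le> N then [int (N - Suc n)] else []) @ a) @ (if Suc n \<le> K then [int M - int (K - Suc n) + 1] else []))"
    using back_part[of "(if Suc n \<le> N then [int (N - Suc n)] else []) @ a"] by simp
  finally show ?thesis by (simp add: image_image Pv_def ext2_def)
qed

lemma box_empty_gap: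
  assumes "Suc i < length x" "x!(Suc i) \<le> x!i + 1"
  shows "box x = {}"
proof -
  { fix y assume y: "y \<in> box x"
    then have "length y + 1 = length x" "\<forall>i<length y. x!i < y!i \<and> y!i < x!Suc i" unfolding box_def by auto
    then have False using assms by (metis add_less_cancel_right Suc_eq_plus1 zless_imp_add1_zle not_le order.strict_trans1) }
  then show ?thesis by blast
qed

lemma G_zero: "x \<noteq> [] \<Longrightarrow> box x = {} \<Longrightarrow> G x = 0"
  using G_rec by simp

lemma box_mono:
  assumes l: "length x' = length x"
    and lo: "\<And>i. Suc i < length x \<Longrightarrow> x!i \<le> x'!i"
    and hi: "\<And>i. 0 < i \<Longrightarrow> i < length x \<Longrightarrow> x'!i \<le> x!i"
  shows "box x' \<subseteq> box x"
proof
  fix y assume "y \<in> box x'"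
  then have ly: "length y + 1 = length x'" and iv: "\<And>i. i < length y \<Longrightarrow> x'!i < y!i \<and> y!i < x'!Suc i"
    unfolding box_def by auto
  show "y \<in> box x" unfolding box_def
  proof (intro CollectI conjI allI impI)
    show "length y + 1 = length x" using ly l by simp
    fix i assume i: "i < length y"
    show "x!i < y!i" using iv[OF i] lo[of i] i ly l by fastforce
    show "y!i < x!Suc i" using iv[OF i] hi[of "Suc i"] i ly l by fastforce
  qed
qed

lemma extl_nth_lo:
  assumes "Suc i < length (extl N K M n a)"
  shows "extl N K M n a ! i \<le> ext2 N K M n a ! i"
  using assms unfolding extl_def ext2_def
  by (cases i) (auto simp: nth_append nth_Cons')

lemma extl_nth_hi:
  assumes "0 < i" "i < length (extl N K M n a)"
  shows "ext2 N K M n a ! i \<le> extl N K M n a ! i"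
  using assms unfolding extl_def ext2_def
  by (auto simp: nth_append nth_Cons')

lemma length_ext2: "length (ext2 N K M n a) = length (extl N K M n a)"
  by (simp add: extl_def ext2_def)

lemma box_ext2_sub: "box (ext2 N K M n a) \<subseteq> box (extl N K M n a)"
  by (rule box_mono[OF length_ext2 extl_nth_lo extl_nth_hi])

lemma ext_diff_lo:
  assumes "Suc i < length (extl N K M n a)" "ext2 N K M n a ! i \<noteq> extl N K M n a ! i"
  shows "i = 0 \<and> n \<le> N \<and> ext2 N K M n a ! i = int (N - n)"
  using assms unfolding extl_def ext2_def
  by (cases i) (auto simp: nth_append nth_Cons' split: if_splits)

lemma ext_diff_hi:
  assumes "0 < i" "i < length (extl N K M n a)" "ext2 N K M n a ! i \<noteq> extl N K M n a ! i"
  shows "Suc i = length (extl N K M n a) \<and> n \<le> K \<and> ext2 N K M n a ! i = int M - int (K - n) + 1"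
  using assms unfolding extl_def ext2_def
  by (auto simp: nth_append nth_Cons' split: if_splits)

lemma G_Pv_zero:
  assumes w1: "w \<in> box (extl N K M (Suc n) a)" and w2: "w \<notin> box (ext2 N K M (Suc n) a)"
  shows "G (Pv N K M (Suc n) w) = 0"
proof -
  let ?x = "extl N K M (Suc n) a" and ?x' = "ext2 N K M (Suc n) a"
  have lw: "length w + 1 = length ?x" and iv: "\<And>i. i < length w \<Longrightarrow> ?x!i < w!i \<and> w!i < ?x!Suc i"
    using w1 unfolding box_def by auto
  have l': "length ?x' = length ?x" by (rule length_ext2)
  obtain i where i: "i < length w" and bad: "\<not> (?x'!i < w!i \<and> w!i < ?x'!Suc i)"
    using w2 lw l' unfolding box_def by auto
  let ?P = "Pv N K M (Suc n) w"
  have Pne: "?P \<noteq> []" using i by (cases w) (auto simp: Pv_def)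
  have Pnth1: "?P ! (length (Uv N (Suc n)) + j) = w ! j" if "j < length w" for j
    using that by (simp add: Pv_def nth_append)
  have "box ?P = {}"
  proof (cases "?x'!i < w!i")
    case False
    then have ne: "?x'!i \<noteq> ?x!i" using iv[OF i] by auto
    from ext_diff_lo[OF _ ne] i lw have d: "i = 0" "Suc n \<le> N" "?x'!i = int (N - Suc n)" by auto
    define s where "s = N - Suc n"
    have "s \<noteq> 0"
    proof
      assume "s = 0"
      then have "?x'!i = 0" using d s_def by simp
      moreover have "?x!i = 0" using d by (simp add: extl_def)
      ultimately show False using ne by simp
    qed
    then obtain s' where s': "s = Suc s'" by (cases s) auto
    have U: "Uv N (Suc n) ! s' = int s'"
      unfolding Uv_def s_def[symmetric] using s' by (simp add: algebra_simps nth_append)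
    have a1: "?P ! s' = int s'" using U s' by (simp add: Pv_def nth_append s_def)
    have a2: "?P ! Suc s' = w ! 0" using Pnth1[of 0] i d s' by (simp add: s_def)
    have "w ! 0 \<le> int s" using False d by (simp add: s_def of_nat_diff)
    then show ?thesis
      by (intro box_empty_gap[of s']) (use a1 a2 s' i d in \<open>auto simp: Pv_def s_def\<close>)
  next
    case True
    then have F: "\<not> w!i < ?x'!Suc i" using bad by simp
    then have ne: "?x'!Suc i \<noteq> ?x!Suc i" using iv[OF i] by auto
    from ext_diff_hi[OF _ _ ne] i lw have d: "Suc (Suc i) = length ?x" "Suc n \<le> K" "?x'!Suc i = int M - int (K - Suc n) + 1" by auto
    define t where "t = K - Suc n"
    have iw: "Suc i = length w" using d lw by simp
    have "t \<noteq> 0"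
    proof
      assume "t = 0"
      then have "?x'!Suc i = int M + 1" using d t_def by simp
      moreover have "?x!Suc i = int M + 1" using d by (simp add: extl_def nth_append split: if_splits)
      ultimately show False using ne by simp
    qed
    let ?u = "length (Uv N (Suc n))"
    have a1: "?P ! (?u + i) = w ! i" using Pnth1 i by simp
    have a2: "?P ! Suc (?u + i) = int M - int t + 2"
      using iw \<open>t \<noteq> 0\<close> by (simp add: Pv_def nth_append Vv_def t_def)
    have "int M - int t + 1 \<le> w ! i" using F d t_def by simp
    then show ?thesis
      by (intro box_empty_gap[of "?u + i"]) (use a1 a2 iw \<open>t \<noteq> 0\<close> in \<open>auto simp: Pv_def t_def\<close>)
  qed
  then show ?thesis using G_zero Pne by simp
qed

lemma STEP:
  assumes ne: "Pv N K M n a \<noteq> []"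
  shows "(\<Sum>b\<in>box (extl N K M (Suc n) a). G (Pv N K M (Suc n) b)) = G (Pv N K M n a)"
proof -
  have inj: "inj_on (\<lambda>w. Pv N K M (Suc n) w) X" for X
    by (rule inj_onI) (simp add: Pv_def)
  have "G (Pv N K M n a) = (\<Sum>y\<in>box (Pv N K M n a). G y)" by (rule G_rec[OF ne])
  also have "\<dots> = (\<Sum>y\<in>(\<lambda>w. Pv N K M (Suc n) w) ` box (ext2 N K M (Suc n) a). G y)"
    by (simp add: box_Pv)
  also have "\<dots> = (\<Sum>w\<in>box (ext2 N K M (Suc n) a). G (Pv N K M (Suc n) w))"
    by (rule sum.reindex[OF inj, unfolded comp_def])
  also have "\<dots> = (\<Sum>b\<in>box (extl N K M (Suc n) a). G (Pv N K M (Suc n) b))"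
    by (rule sum.mono_neutral_left[OF box_finite box_ext2_sub]) (use G_Pv_zero in blast)
  finally show ?thesis ..
qed

primrec chainsR :: "nat \<Rightarrow> nat \<Rightarrow> nat \<Rightarrow> nat \<Rightarrow> nat \<Rightarrow> int list \<Rightarrow> int list list set" where
  "chainsR N K M 0 n a = (if a = [] then {[]} else {})"
| "chainsR N K M (Suc d) n a = (\<lambda>(b, cs). b # cs) ` (SIGMA b:box (extl N K M (Suc n) a). chainsR N K M d (Suc n) b)"

lemma length_Pv_step:
  assumes "length (Pv N K M n a) = Suc d" "b \<in> box (extl N K M (Suc n) a)"
  shows "length (Pv N K M (Suc n) b) = d"
proof -
  have "length b + 1 = length (extl N K M (Suc n) a)" using assms(2) by (rule box_length)
  then show ?thesis using assms(1) by (auto simp: Pv_def extl_def split: if_splits)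
qed

lemma CNT:
  assumes "length (Pv N K M n a) = d"
  shows "finite (chainsR N K M d n a) \<and> card (chainsR N K M d n a) = G (Pv N K M n a)"
  using assms
proof (induction d arbitrary: n a)
  case 0
  then have "a = []" "Pv N K M n a = []" by (auto simp: Pv_def Uv_def Vv_def)
  then show ?case by simp
next
  case (Suc d n a)
  let ?B = "box (extl N K M (Suc n) a)"
  let ?S = "SIGMA b:?B. chainsR N K M d (Suc n) b"
  have IH: "finite (chainsR N K M d (Suc n) b) \<and> card (chainsR N K M d (Suc n) b) = G (Pv N K M (Suc n) b)"
    if "b \<in> ?B" for b
    using Suc.IH[OF length_Pv_step[OF Suc.prems that]] .
  have inj: "inj_on (\<lambda>(b, cs). b # cs) ?S" by (rule inj_onI) auto
  have fS: "finite ?S" using IH box_finite by (intro finite_SigmaI) auto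
  have "card (chainsR N K M (Suc d) n a) = card ?S" by (simp add: card_image[OF inj])
  also have "\<dots> = (\<Sum>b\<in>?B. card (chainsR N K M d (Suc n) b))"
    by (rule card_SigmaI) (use IH box_finite in auto)
  also have "\<dots> = (\<Sum>b\<in>?B. G (Pv N K M (Suc n) b))"
    by (rule sum.cong) (use IH in auto)
  also have "\<dots> = G (Pv N K M n a)"
    by (rule STEP) (use Suc.prems in auto)
  finally show ?case using fS by simp
qed


definition cnt :: "int list \<Rightarrow> int \<Rightarrow> nat" where
  "cnt xs c = length (filter (\<lambda>t. t \<le> c) xs)"

lemma cnt_le_length: "cnt xs c \<le> length xs"
  unfolding cnt_def by simp

lemma rank:
  assumes s: "sorted_wrt (<) x" and i: "i < length x"
  shows "x!i \<le> c \<longleftrightarrow> i < cnt x c"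
proof -
  have cc: "cnt x c = card {j. j < length x \<and> x!j \<le> c}"
    unfolding cnt_def by (rule length_filter_conv_card)
  have mono: "x!j \<le> x!k" if "j \<le> k" "k < length x" for j k
    using s that by (metis le_less sorted_wrt_iff_nth_less)
  show ?thesis
  proof
    assume xc: "x!i \<le> c"
    have "{0..i} \<subseteq> {j. j < length x \<and> x!j \<le> c}"
      using xc i mono by fastforce
    then have "card {0..i} \<le> cnt x c" unfolding cc by (rule card_mono[rotated]) simp
    then show "i < cnt x c" by simp
  next
    assume ic: "i < cnt x c"
    show "x!i \<le> c"
    proof (rule ccontr)
      assume "\<not> x!i \<le> c"
      then have "{j. j < length x \<and> x!j \<le> c} \<subseteq> {0..<i}"
        using mono by (fastforce simp: not_le)
      then have "cnt x c \<le> i" unfolding cc by (metis card_atLeastLessThan card_mono diff_zero finite_atLeastLessThan)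
      with ic show False by simp
    qed
  qed
qed

lemma cnt_nth:
  assumes s: "sorted_wrt (<) x" and i: "i < length x"
  shows "cnt x (x!i) = Suc i"
proof -
  have "i < cnt x (x!i)" using rank[OF s i, of "x!i"] by simp
  moreover have "cnt x (x!i) \<le> Suc i"
  proof (cases "Suc i < length x")
    case True
    have "x!i < x!Suc i" using s True by (simp add: sorted_wrt_iff_nth_less)
    then have "\<not> Suc i < cnt x (x!i)" using rank[OF s True, of "x!i"] by simp
    then show ?thesis by simp
  next
    case False
    then show ?thesis using cnt_le_length[of x "x!i"] i by simp
  qed
  ultimately show ?thesis by simp
qed

lemma dform:
  assumes sx: "sorted_wrt (<) x" and sy: "sorted_wrt (<) y"
  shows "y \<in> box x \<longleftrightarrow> length y + 1 = length x \<and> set x \<inter> set y = {} \<and>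
           (\<forall>c. cnt y c \<le> cnt x c \<and> cnt x c \<le> cnt y c + 1)"
proof
  assume y: "y \<in> box x"
  then have l: "length y + 1 = length x" and iv: "\<And>i. i < length y \<Longrightarrow> x!i < y!i \<and> y!i < x!Suc i"
    unfolding box_def by auto
  have mx: "x!j \<le> x!k" if "j \<le> k" "k < length x" for j k
    using sx that by (metis le_less sorted_wrt_iff_nth_less)
  have my: "y!j \<le> y!k" if "j \<le> k" "k < length y" for j k
    using sy that by (metis le_less sorted_wrt_iff_nth_less)
  have disj: "set x \<inter> set y = {}"
  proof (rule ccontr)
    assume "set x \<inter> set y \<noteq> {}"
    then obtain t where t: "t \<in> set x" "t \<in> set y" by blast
    then obtain i j where i: "i < length x" and j: "j < length y" and e: "x!i = y!j"
      by (metis in_set_conv_nth)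
    show False
    proof (cases "i \<le> j")
      case True
      then have "x!i \<le> x!j" using mx j l by simp
      then show False using iv[OF j] e by simp
    next
      case False
      then have "x!Suc j \<le> x!i" using mx i by simp
      then show False using iv[OF j] e by simp
    qed
  qed
  have D: "cnt y c \<le> cnt x c \<and> cnt x c \<le> cnt y c + 1" for c
  proof
    show "cnt y c \<le> cnt x c"
    proof (rule ccontr)
      assume "\<not> cnt y c \<le> cnt x c"
      then have k: "cnt x c < cnt y c" by simp
      then have kl: "cnt x c < length y" using cnt_le_length[of y c] by simp
      have "y!(cnt x c) \<le> c" using rank[OF sy kl] k by simp
      then have "x!(cnt x c) \<le> c" using iv[OF kl] by simp
      then have "cnt x c < cnt x c" using rank[OF sx, of "cnt x c" c] kl l by simp
      then show False by simp
    qed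
    show "cnt x c \<le> cnt y c + 1"
    proof (rule ccontr)
      assume "\<not> cnt x c \<le> cnt y c + 1"
      then have k: "Suc (cnt y c) < cnt x c" by simp
      then have kl: "Suc (cnt y c) < length x" using cnt_le_length[of x c] by simp
      have "x!Suc (cnt y c) \<le> c" using rank[OF sx kl] k by simp
      moreover have yl: "cnt y c < length y" using kl l by simp
      ultimately have "y!(cnt y c) \<le> c" using iv[OF yl] by simp
      then have "cnt y c < cnt y c" using rank[OF sy yl] by simp
      then show False by simp
    qed
  qed
  show "length y + 1 = length x \<and> set x \<inter> set y = {} \<and> (\<forall>c. cnt y c \<le> cnt x c \<and> cnt x c \<le> cnt y c + 1)"
    using l disj D by blast
next
  assume h: "length y + 1 = length x \<and> set x \<inter> set y = {} \<and> (\<forall>c. cnt y c \<le> cnt x c \<and> cnt x c \<le> cnt y c + 1)"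
  then have l: "length y + 1 = length x" and disj: "set x \<inter> set y = {}"
    and D: "\<And>c. cnt y c \<le> cnt x c \<and> cnt x c \<le> cnt y c + 1" by auto
  show "y \<in> box x" unfolding box_def
  proof (intro CollectI conjI allI impI)
    show "length y + 1 = length x" by (rule l)
    fix i assume i: "i < length y"
    have ix: "i < length x" "Suc i < length x" using i l by auto
    have ne1: "x!i \<noteq> y!i" using disj ix i by (metis disjoint_iff nth_mem)
    have ne2: "x!Suc i \<noteq> y!i" using disj ix i by (metis disjoint_iff nth_mem)
    have "cnt y (y!i) = Suc i" by (rule cnt_nth[OF sy i])
    then have "i < cnt x (y!i)" using D[of "y!i"] by simp
    then have "x!i \<le> y!i" using rank[OF sx ix(1)] by simp
    then show "x!i < y!i" using ne1 by simp
    have "cnt x (x!Suc i) = Suc (Suc i)" by (rule cnt_nth[OF sx ix(2)])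
    then have "i < cnt y (x!Suc i)" using D[of "x!Suc i"] by simp
    then have "y!i \<le> x!Suc i" using rank[OF sy i] by simp
    then show "y!i < x!Suc i" using ne2 by simp
  qed
qed

lemma cnt_append: "cnt (xs @ ys) c = cnt xs c + cnt ys c"
  by (simp add: cnt_def)

lemma cnt_single: "cnt [t] c = (if t \<le> c then 1 else 0)"
  by (simp add: cnt_def)

lemma cnt_Nil[simp]: "cnt [] c = 0"
  by (simp add: cnt_def)

lemma sorted_extl:
  assumes "sorted_wrt (<) a" "\<forall>t\<in>set a. 1 \<le> t \<and> t \<le> int M"
  shows "sorted_wrt (<) (extl N K M n a)"
  using assms unfolding extl_def by (auto simp: sorted_wrt_append)

lemma box_bounds:
  assumes y: "y \<in> box x" and xb: "\<forall>t\<in>set x. 0 \<le> t \<and> t \<le> int M + 1"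
  shows "\<forall>t\<in>set y. 1 \<le> t \<and> t \<le> int M"
proof
  fix t assume "t \<in> set y"
  then obtain i where i: "i < length y" and t: "t = y!i" by (auto simp: in_set_conv_nth)
  have l: "length y + 1 = length x" and iv: "x!i < y!i \<and> y!i < x!Suc i"
    using y i unfolding box_def by auto
  have "x!i \<in> set x" "x!Suc i \<in> set x" using i l by auto
  then show "1 \<le> t \<and> t \<le> int M" using iv xb t by fastforce
qed

lemma extl_bounds:
  assumes "\<forall>t\<in>set a. 1 \<le> t \<and> t \<le> int M"
  shows "\<forall>t\<in>set (extl N K M n a). 0 \<le> t \<and> t \<le> int M + 1"
  using assms unfolding extl_def by auto

lemma chains_char:
  "cs \<in> chainsR N K M d n a \<longleftrightarrow> length cs = d \<and>
     (\<forall>j<d. cs!j \<in> box (extl N K M (Suc (n + j)) ((a # cs)!j))) \<and> (a # cs)!d = []"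
proof (induction d arbitrary: n a cs)
  case 0
  then show ?case by auto
next
  case (Suc d)
  show ?case
  proof
    assume "cs \<in> chainsR N K M (Suc d) n a"
    then obtain b cs' where cs: "cs = b # cs'" and b: "b \<in> box (extl N K M (Suc n) a)"
      and cs': "cs' \<in> chainsR N K M d (Suc n) b" by auto
    from cs' Suc.IH have h: "length cs' = d" "\<forall>j<d. cs'!j \<in> box (extl N K M (Suc (Suc n + j)) ((b # cs')!j))"
      "(b # cs')!d = []" by auto
    show "length cs = Suc d \<and> (\<forall>j<Suc d. cs!j \<in> box (extl N K M (Suc (n + j)) ((a # cs)!j))) \<and> (a # cs)!Suc d = []"
    proof (intro conjI allI impI)
      show "length cs = Suc d" using cs h by simp
      show "(a # cs)!Suc d = []" using cs h by simp
      fix j assume j: "j < Suc d"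
      show "cs!j \<in> box (extl N K M (Suc (n + j)) ((a # cs)!j))"
      proof (cases j)
        case 0
        then show ?thesis using cs b by simp
      next
        case (Suc j')
        then show ?thesis using cs h(2) j by auto
      qed
    qed
  next
    assume h: "length cs = Suc d \<and> (\<forall>j<Suc d. cs!j \<in> box (extl N K M (Suc (n + j)) ((a # cs)!j))) \<and> (a # cs)!Suc d = []"
    then obtain b cs' where cs: "cs = b # cs'" by (cases cs) auto
    have b: "b \<in> box (extl N K M (Suc n) a)" using h cs by (metis add_0_right nth_Cons_0 zero_less_Suc)
    have "cs' \<in> chainsR N K M d (Suc n) b"
      unfolding Suc.IH
    proof (intro conjI allI impI)
      show "length cs' = d" using h cs by simp
      show "(b # cs')!d = []" using h cs by simp
      fix j assume j: "j < d"
      have "cs!Suc j \<in> box (extl N K M (Suc (n + Suc j)) ((a # cs)!Suc j))" using h j by blast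
      then show "cs'!j \<in> box (extl N K M (Suc (Suc n + j)) ((b # cs')!j))" using cs by simp
    qed
    then show "cs \<in> chainsR N K M (Suc d) n a" using cs b by auto
  qed
qed

definition cA :: "nat set \<Rightarrow> nat \<Rightarrow> nat" where
  "cA S m = card {m'\<in>S. m' \<le> m}"

lemma cnt_set:
  assumes "distinct xs" "set xs = int ` S"
  shows "cnt xs c = (if c < 0 then 0 else cA S (nat c))"
proof -
  have "cnt xs c = card ({t. t \<le> c} \<inter> int ` S)"
    unfolding cnt_def using assms by (simp add: distinct_length_filter)
  also have "{t. t \<le> c} \<inter> int ` S = int ` {m'\<in>S. int m' \<le> c}" by auto
  also have "card \<dots> = card {m'\<in>S. int m' \<le> c}" by (rule card_image) (simp add: inj_on_def)
  also have "\<dots> = (if c < 0 then 0 else cA S (nat c))"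
    unfolding cA_def by (cases "c < 0") (auto intro!: arg_cong[where f=card])
  finally show ?thesis .
qed

lemma cA_0: "(\<forall>m\<in>S. 1 \<le> m) \<Longrightarrow> cA S 0 = 0"
  unfolding cA_def by (auto intro!: arg_cong[where f=card])

lemma cA_Suc: "cA S (Suc m) = cA S m + (if Suc m \<in> S then 1 else 0)"
proof -
  have fin: "finite {m'\<in>S. m' \<le> m}" by (rule finite_subset[of _ "{..m}"]) auto
  have "{m'\<in>S. m' \<le> Suc m} = (if Suc m \<in> S then insert (Suc m) {m'\<in>S. m' \<le> m} else {m'\<in>S. m' \<le> m})"
    by (auto simp: le_Suc_eq)
  then show ?thesis unfolding cA_def using fin by auto
qed

lemma cA_big: "S \<subseteq> {1..M} \<Longrightarrow> M \<le> m \<Longrightarrow> cA S m = card S"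
  unfolding cA_def by (auto intro!: arg_cong[where f=card])

lemma column_iff:
  assumes A: "A \<subseteq> {1..M}" and B: "B \<subseteq> {1..M}"
    and a: "sorted_wrt (<) a" "set a = int ` A" and b: "sorted_wrt (<) b" "set b = int ` B"
  shows "b \<in> box (extl N K M n a) \<longleftrightarrow>
    int (card B) + 1 = int (of_bool (n \<le> N)) + int (card A) + int (of_bool (n \<le> K)) \<and> A \<inter> B = {} \<and>
    (\<forall>m\<le>M. int (cA B m) \<le> int (of_bool (n \<le> N)) + int (cA A m) \<and>
             int (of_bool (n \<le> N)) + int (cA A m) \<le> int (cA B m) + 1)"
proof -
  have fA: "finite A" and fB: "finite B" using A B finite_subset by auto
  have da: "distinct a" and db: "distinct b" using a b by (auto simp: strict_sorted_iff)
  have la: "length a = card A" using da a(2) by (metis card_image distinct_card inj_on_def of_nat_eq_iff)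
  have lb: "length b = card B" using db b(2) by (metis card_image distinct_card inj_on_def of_nat_eq_iff)
  have abnd: "\<forall>t\<in>set a. 1 \<le> t \<and> t \<le> int M" using a(2) A by auto
  have sx: "sorted_wrt (<) (extl N K M n a)" by (rule sorted_extl[OF a(1) abnd])
  have lx: "length (extl N K M n a) = of_bool (n \<le> N) + length a + of_bool (n \<le> K)"
    by (simp add: extl_def)
  have cx: "cnt (extl N K M n a) c = of_bool (n \<le> N \<and> 0 \<le> c) + cnt a c + of_bool (n \<le> K \<and> int M + 1 \<le> c)" for c
    by (simp add: extl_def cnt_append cnt_single)
  have ca: "cnt a c = (if c < 0 then 0 else cA A (nat c))" for c by (rule cnt_set[OF da a(2)])
  have cb: "cnt b c = (if c < 0 then 0 else cA B (nat c))" for c by (rule cnt_set[OF db b(2)])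
  have disj: "set (extl N K M n a) \<inter> set b = {} \<longleftrightarrow> A \<inter> B = {}"
  proof -
    have "set (extl N K M n a) = (if n \<le> N then {0} else {}) \<union> int ` A \<union> (if n \<le> K then {int M + 1} else {})"
      using a(2) by (auto simp: extl_def)
    then show ?thesis using b(2) B by auto
  qed
  have lenq: "length b + 1 = length (extl N K M n a) \<longleftrightarrow>
      int (card B) + 1 = int (of_bool (n \<le> N)) + int (card A) + int (of_bool (n \<le> K))"
    using lx la lb by linarith
  have D: "(\<forall>c. cnt b c \<le> cnt (extl N K M n a) c \<and> cnt (extl N K M n a) c \<le> cnt b c + 1) \<longleftrightarrow>
      (\<forall>m\<le>M. int (cA B m) \<le> int (of_bool (n \<le> N)) + int (cA A m) \<and>
             int (of_bool (n \<le> N)) + int (cA A m) \<le> int (cA B m) + 1)"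
    if eq: "int (card B) + 1 = int (of_bool (n \<le> N)) + int (card A) + int (of_bool (n \<le> K))"
  proof
    assume h: "\<forall>c. cnt b c \<le> cnt (extl N K M n a) c \<and> cnt (extl N K M n a) c \<le> cnt b c + 1"
    show "\<forall>m\<le>M. int (cA B m) \<le> int (of_bool (n \<le> N)) + int (cA A m) \<and>
             int (of_bool (n \<le> N)) + int (cA A m) \<le> int (cA B m) + 1"
    proof (intro allI impI)
      fix m assume m: "m \<le> M"
      have "cnt b (int m) \<le> cnt (extl N K M n a) (int m) \<and> cnt (extl N K M n a) (int m) \<le> cnt b (int m) + 1"
        using h by blast
      then show "int (cA B m) \<le> int (of_bool (n \<le> N)) + int (cA A m) \<and>
             int (of_bool (n \<le> N)) + int (cA A m) \<le> int (cA B m) + 1"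
        using m by (cases "n \<le> N") (simp_all add: cx ca cb)
    qed
  next
    assume h: "\<forall>m\<le>M. int (cA B m) \<le> int (of_bool (n \<le> N)) + int (cA A m) \<and>
             int (of_bool (n \<le> N)) + int (cA A m) \<le> int (cA B m) + 1"
    show "\<forall>c. cnt b c \<le> cnt (extl N K M n a) c \<and> cnt (extl N K M n a) c \<le> cnt b c + 1"
    proof
      fix c
      consider "c < 0" | "0 \<le> c" "c \<le> int M" | "int M < c" by linarith
      then show "cnt b c \<le> cnt (extl N K M n a) c \<and> cnt (extl N K M n a) c \<le> cnt b c + 1"
      proof cases
        case 1
        then show ?thesis by (simp add: cx ca cb)
      next
        case 2
        then have "nat c \<le> M" by simp
        then have "int (cA B (nat c)) \<le> int (of_bool (n \<le> N)) + int (cA A (nat c)) \<and>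
             int (of_bool (n \<le> N)) + int (cA A (nat c)) \<le> int (cA B (nat c)) + 1" using h by blast
        then show ?thesis using 2 by (cases "n \<le> N") (simp_all add: cx ca cb)
      next
        case 3
        then have "M \<le> nat c" by simp
        then have "cA A (nat c) = card A" "cA B (nat c) = card B" using cA_big A B by auto
        then show ?thesis using 3 eq by (cases "n \<le> N"; cases "n \<le> K") (simp_all add: cx ca cb)
      qed
    qed
  qed
  show ?thesis
    unfolding dform[OF sx b(1)] using lenq disj D by blast
qed


lemma allowed_iff:
  "allowed_vertex S Nn W E \<longleftrightarrow> \<not> (W \<and> E) \<and>
     int (of_bool Nn) = int (of_bool S) + int (of_bool W) - int (of_bool E)"
  unfolding allowed_vertex_def by (cases S; cases Nn; cases W; cases E) auto

definition hl :: "(nat \<Rightarrow> nat \<Rightarrow> bool) \<Rightarrow> nat \<Rightarrow> int list" where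
  "hl h n = sorted_list_of_set (int ` {m. h n m})"

lemma cfg_D:
  assumes "(v, h) \<in> four_vertex_configs (N + K) M N"
  shows "\<And>n m. v n m \<Longrightarrow> 1 \<le> n \<and> n \<le> N + K \<and> m \<le> M"
    and "\<And>n m. h n m \<Longrightarrow> n \<le> N + K \<and> 1 \<le> m \<and> m \<le> M"
    and "\<And>n m. 1 \<le> n \<Longrightarrow> n \<le> N + K \<Longrightarrow> 1 \<le> m \<Longrightarrow> m \<le> M \<Longrightarrow>
           allowed_vertex (v n (m - 1)) (v n m) (h (n - 1) m) (h n m)"
    and "\<And>n. 1 \<le> n \<Longrightarrow> n \<le> N + K \<Longrightarrow> v n 0 \<longleftrightarrow> n \<le> N"
    and "\<And>n. 1 \<le> n \<Longrightarrow> n \<le> N + K \<Longrightarrow> v n M \<longleftrightarrow> K + 1 \<le> n"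
    and "\<And>m. \<not> h 0 m" and "\<And>m. \<not> h (N + K) m"
proof -
  have a: "(\<forall>n m. v n m \<longrightarrow> 1 \<le> n \<and> n \<le> N + K \<and> m \<le> M) \<and>
     (\<forall>n m. h n m \<longrightarrow> n \<le> N + K \<and> 1 \<le> m \<and> m \<le> M) \<and>
     (\<forall>n\<in>{1..N + K}. \<forall>m\<in>{1..M}.
        allowed_vertex (v n (m - 1)) (v n m) (h (n - 1) m) (h n m)) \<and>
     (\<forall>n\<in>{1..N + K}. v n 0 \<longleftrightarrow> n \<le> N) \<and>
     (\<forall>n\<in>{1..N + K}. v n M \<longleftrightarrow> N + K - N + 1 \<le> n) \<and>
     (\<forall>m\<in>{1..M}. \<not> h 0 m \<and> \<not> h (N + K) m)"
    using assms unfolding four_vertex_configs_def by (simp only: mem_Collect_eq case_prod_conv)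
  then have a1: "\<forall>n m. v n m \<longrightarrow> 1 \<le> n \<and> n \<le> N + K \<and> m \<le> M"
    and a2: "\<forall>n m. h n m \<longrightarrow> n \<le> N + K \<and> 1 \<le> m \<and> m \<le> M"
    and a3: "\<forall>n\<in>{1..N + K}. \<forall>m\<in>{1..M}. allowed_vertex (v n (m - 1)) (v n m) (h (n - 1) m) (h n m)"
    and a4: "\<forall>n\<in>{1..N + K}. v n 0 \<longleftrightarrow> n \<le> N"
    and a5: "\<forall>n\<in>{1..N + K}. v n M \<longleftrightarrow> N + K - N + 1 \<le> n"
    and a6: "\<forall>m\<in>{1..M}. \<not> h 0 m \<and> \<not> h (N + K) m"
    by blast+
  show "\<And>n m. v n m \<Longrightarrow> 1 \<le> n \<and> n \<le> N + K \<and> m \<le> M" using a1 by blast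
  show hs: "\<And>n m. h n m \<Longrightarrow> n \<le> N + K \<and> 1 \<le> m \<and> m \<le> M" using a2 by blast
  show "\<And>n m. 1 \<le> n \<Longrightarrow> n \<le> N + K \<Longrightarrow> 1 \<le> m \<Longrightarrow> m \<le> M \<Longrightarrow>
           allowed_vertex (v n (m - 1)) (v n m) (h (n - 1) m) (h n m)" using a3 by simp
  show "\<And>n. 1 \<le> n \<Longrightarrow> n \<le> N + K \<Longrightarrow> v n 0 \<longleftrightarrow> n \<le> N" using a4 by simp
  show "\<And>n. 1 \<le> n \<Longrightarrow> n \<le> N + K \<Longrightarrow> v n M \<longleftrightarrow> K + 1 \<le> n" using a5 by simp
  show "\<And>m. \<not> h 0 m"
  proof -
    fix m show "\<not> h 0 m"
    proof
      assume "h 0 m"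
      then have "m \<in> {1..M}" using hs by simp
      then show False using a6 \<open>h 0 m\<close> by blast
    qed
  qed
  show "\<And>m. \<not> h (N + K) m"
  proof -
    fix m show "\<not> h (N + K) m"
    proof
      assume "h (N + K) m"
      then have "m \<in> {1..M}" using hs by simp
      then show False using a6 \<open>h (N + K) m\<close> by blast
    qed
  qed
qed

lemma vcount:
  assumes cfg: "(v, h) \<in> four_vertex_configs (N + K) M N"
    and n: "1 \<le> n" "n \<le> N + K" and m: "m \<le> M"
  shows "int (of_bool (v n m)) = int (of_bool (n \<le> N)) + int (cA {m. h (n - 1) m} m) - int (cA {m. h n m} m)"
  using m
proof (induction m)
  case 0
  have "cA {m. h (n - 1) m} 0 = 0" "cA {m. h n m} 0 = 0"
    using cfg_D(2)[OF cfg] by (auto intro!: cA_0)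
  then show ?case using cfg_D(4)[OF cfg n] by simp
next
  case (Suc m)
  have av: "allowed_vertex (v n m) (v n (Suc m)) (h (n - 1) (Suc m)) (h n (Suc m))"
    using cfg_D(3)[OF cfg n, of "Suc m"] Suc.prems by simp
  then show ?case unfolding allowed_iff using Suc by (simp add: cA_Suc)
qed

lemma hl_facts:
  assumes cfg: "(v, h) \<in> four_vertex_configs (N + K) M N"
  shows "{m. h n m} \<subseteq> {1..M}" "sorted_wrt (<) (hl h n)" "set (hl h n) = int ` {m. h n m}"
proof -
  show sub: "{m. h n m} \<subseteq> {1..M}" using cfg_D(2)[OF cfg] by auto
  then have fin: "finite (int ` {m. h n m})" using finite_subset by blast
  show "sorted_wrt (<) (hl h n)" unfolding hl_def by (rule strict_sorted_list_of_set)
  show "set (hl h n) = int ` {m. h n m}" unfolding hl_def using fin by simp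
qed

lemma column_cfg:
  assumes cfg: "(v, h) \<in> four_vertex_configs (N + K) M N"
    and n: "1 \<le> n" "n \<le> N + K"
  shows "hl h n \<in> box (extl N K M n (hl h (n - 1)))"
proof -
  let ?A = "{m. h (n - 1) m}" and ?B = "{m. h n m}"
  note fA = hl_facts[OF cfg, of "n - 1"] and fB = hl_facts[OF cfg, of n]
  have vM: "int (of_bool (v n M)) = int (of_bool (n \<le> N)) + int (card ?A) - int (card ?B)"
    using vcount[OF cfg n order_refl] cA_big[OF fA(1) order_refl] cA_big[OF fB(1) order_refl] by simp
  have eq: "int (card ?B) + 1 = int (of_bool (n \<le> N)) + int (card ?A) + int (of_bool (n \<le> K))"
    using vM cfg_D(5)[OF cfg n] by (cases "n \<le> K") auto
  have disj: "?A \<inter> ?B = {}"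
  proof -
    { fix m assume "h (n - 1) m" "h n m"
      then have "1 \<le> m" "m \<le> M" using cfg_D(2)[OF cfg] by auto
      then have False using cfg_D(3)[OF cfg n, of m] \<open>h (n - 1) m\<close> \<open>h n m\<close> by (simp add: allowed_iff) }
    then show ?thesis by blast
  qed
  have D: "\<forall>m\<le>M. int (cA ?B m) \<le> int (of_bool (n \<le> N)) + int (cA ?A m) \<and>
             int (of_bool (n \<le> N)) + int (cA ?A m) \<le> int (cA ?B m) + 1"
  proof (intro allI impI)
    fix m assume "m \<le> M"
    from vcount[OF cfg n this] show "int (cA ?B m) \<le> int (of_bool (n \<le> N)) + int (cA ?A m) \<and>
             int (of_bool (n \<le> N)) + int (cA ?A m) \<le> int (cA ?B m) + 1"
      by (cases "v n m") auto
  qed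
  show ?thesis
    unfolding column_iff[OF fA(1) fB(1) fA(2) fA(3) fB(2) fB(3)] using eq disj D by blast
qed


definition Psi :: "nat \<Rightarrow> (nat \<Rightarrow> nat \<Rightarrow> bool) \<Rightarrow> int list list" where
  "Psi L h = map (hl h) [1..<Suc L]"

lemma hl_empty: "(\<And>m. \<not> h n m) \<Longrightarrow> hl h n = []"
proof -
  assume "\<And>m. \<not> h n m"
  then have e: "int ` {m. h n m} = {}" by auto
  show ?thesis unfolding hl_def e by simp
qed

lemma Psi_nth: "j < L \<Longrightarrow> Psi L h ! j = hl h (Suc j)"
  unfolding Psi_def by (simp del: upt_Suc add: nth_map nth_upt)

lemma Psi_length[simp]: "length (Psi L h) = L"
  unfolding Psi_def by simp

lemma Psi_chain:
  assumes cfg: "(v, h) \<in> four_vertex_configs (N + K) M N"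
  shows "Psi (N + K) h \<in> chainsR N K M (N + K) 0 []"
  unfolding chains_char
proof (intro conjI allI impI)
  show "length (Psi (N + K) h) = N + K" by simp
  have nth: "([] # Psi (N + K) h) ! j = hl h j" if "j \<le> N + K" for j
  proof (cases j)
    case 0
    then show ?thesis using hl_empty[of h 0] cfg_D(6)[OF cfg] by simp
  next
    case (Suc j')
    then show ?thesis using that Psi_nth[of j' "N + K" h] by simp
  qed
  show "([] # Psi (N + K) h) ! (N + K) = []"
    using nth[of "N + K"] hl_empty[of h "N + K"] cfg_D(7)[OF cfg] by simp
  fix j assume j: "j < N + K"
  have "Psi (N + K) h ! j = hl h (Suc j)" using j by (rule Psi_nth)
  moreover have "hl h (Suc j) \<in> box (extl N K M (Suc j) (hl h (Suc j - 1)))"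
    by (rule column_cfg[OF cfg]) (use j in auto)
  ultimately show "Psi (N + K) h ! j \<in> box (extl N K M (Suc (0 + j)) (([] # Psi (N + K) h) ! j))"
    using nth[of j] j by simp
qed

lemma Psi_inj:
  assumes c1: "(v, h) \<in> four_vertex_configs (N + K) M N" and c2: "(v', h') \<in> four_vertex_configs (N + K) M N"
    and eq: "Psi (N + K) h = Psi (N + K) h'"
  shows "(v, h) = (v', h')"
proof -
  have hh: "h n m = h' n m" for n m
  proof (cases "1 \<le> n \<and> n \<le> N + K")
    case True
    have "hl h n = hl h' n"
    proof -
      have "Psi (N + K) h ! (n - 1) = Psi (N + K) h' ! (n - 1)" using eq by simp
      moreover have "n - 1 < N + K" using True by arith
      ultimately show ?thesis using True Psi_nth[of "n - 1" "N + K" h] Psi_nth[of "n - 1" "N + K" h'] by simp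
    qed
    then have "int ` {m. h n m} = int ` {m. h' n m}"
      using hl_facts(3)[OF c1, of n] hl_facts(3)[OF c2, of n] by simp
    then have "{m. h n m} = {m. h' n m}" by (simp add: inj_image_eq_iff inj_on_def)
    then show ?thesis by blast
  next
    case False
    then consider "n = 0" | "N + K < n" by linarith
    then show ?thesis
    proof cases
      case 1
      then show ?thesis using cfg_D(6)[OF c1] cfg_D(6)[OF c2] by simp
    next
      case 2
      then show ?thesis using cfg_D(2)[OF c1, of n m] cfg_D(2)[OF c2, of n m] by auto
    qed
  qed
  then have h_eq: "h = h'" by (intro ext)
  have "v n m = v' n m" for n m
  proof (cases "1 \<le> n \<and> n \<le> N + K \<and> m \<le> M")
    case True
    then have "int (of_bool (v n m)) = int (of_bool (v' n m))"
      using vcount[OF c1, of n m] vcount[OF c2, of n m] h_eq by simp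
    then show ?thesis by (cases "v n m"; cases "v' n m") auto
  next
    case False
    then show ?thesis using cfg_D(1)[OF c1, of n m] cfg_D(1)[OF c2, of n m] by auto
  qed
  then have "v = v'" by (intro ext)
  then show ?thesis using h_eq by simp
qed


lemma chain_cfg:
  assumes cs: "cs \<in> chainsR N K M (N + K) 0 []"
  shows "\<exists>v h. (v, h) \<in> four_vertex_configs (N + K) M N \<and> Psi (N + K) h = cs"
proof -
  define L where "L = N + K"
  from cs[unfolded chains_char] have lc: "length cs = L"
    and bx: "\<forall>j<L. cs!j \<in> box (extl N K M (Suc j) (([] # cs)!j))"
    and lst: "([] # cs)!L = []" by (auto simp: L_def)
  define hs where "hs n = ([] # cs) ! n" for n
  have step: "hs n \<in> box (extl N K M n (hs (n - 1)))" if n1: "1 \<le> n" "n \<le> L" for n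
  proof -
    obtain j where j: "n = Suc j" using n1 by (cases n) auto
    have "cs!j \<in> box (extl N K M (Suc j) (([] # cs)!j))" using bx j n1 by simp
    then show ?thesis using j by (simp add: hs_def)
  qed
  have inv: "sorted_wrt (<) (hs n) \<and> (\<forall>t\<in>set (hs n). 1 \<le> t \<and> t \<le> int M)" if "n \<le> L" for n
    using that
  proof (induction n)
    case 0
    then show ?case by (simp add: hs_def)
  next
    case (Suc n)
    have b: "hs (Suc n) \<in> box (extl N K M (Suc n) (hs n))" using step[of "Suc n"] Suc.prems by simp
    have ih: "\<forall>t\<in>set (hs n). 1 \<le> t \<and> t \<le> int M" using Suc by simp
    show ?case using box_sorted[OF b] box_bounds[OF b extl_bounds[OF ih]] by simp
  qed
  define h where "h n m = (n \<le> L \<and> int m \<in> set (hs n))" for n m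
  have hset: "set (hs n) = int ` {m. h n m}" if "n \<le> L" for n
  proof -
    have "\<forall>t\<in>set (hs n). 1 \<le> t" using inv[OF that] by blast
    then show ?thesis unfolding h_def using that by (force simp: image_iff intro: exI[of _ "nat _"])
  qed
  have hsub: "{m. h n m} \<subseteq> {1..M}" for n
    using inv unfolding h_def by force
  have hge: "1 \<le> m" if "h n m" for n m
    using hsub[of n] that by (meson atLeastAtMost_iff mem_Collect_eq subsetD)
  define v where "v n m = (1 \<le> n \<and> n \<le> L \<and> m \<le> M \<and>
      int (of_bool (n \<le> N)) + int (cA {m. h (n - 1) m} m) - int (cA {m. h n m} m) = 1)" for n m
  have col: "int (card {m. h n m}) + 1 = int (of_bool (n \<le> N)) + int (card {m. h (n - 1) m}) + int (of_bool (n \<le> K)) \<and>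
      {m. h (n - 1) m} \<inter> {m. h n m} = {} \<and>
      (\<forall>m\<le>M. int (cA {m. h n m} m) \<le> int (of_bool (n \<le> N)) + int (cA {m. h (n - 1) m} m) \<and>
             int (of_bool (n \<le> N)) + int (cA {m. h (n - 1) m} m) \<le> int (cA {m. h n m} m) + 1)"
    if n: "1 \<le> n" "n \<le> L" for n
  proof -
    have bb: "hs n \<in> box (extl N K M n (hs (n - 1)))" by (rule step[OF n])
    have s1: "sorted_wrt (<) (hs (n - 1))" and s2: "sorted_wrt (<) (hs n)" using inv n by auto
    have e1: "set (hs (n - 1)) = int ` {m. h (n - 1) m}" and e2: "set (hs n) = int ` {m. h n m}"
      using hset n by auto
    show ?thesis
      using column_iff[OF hsub hsub s1 e1 s2 e2] bb by blast
  qed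
  have vD: "int (of_bool (v n k)) = int (of_bool (n \<le> N)) + int (cA {m. h (n - 1) m} k) - int (cA {m. h n m} k)"
    if n: "1 \<le> n" "n \<le> L" and k: "k \<le> M" for n k
  proof -
    have "int (cA {m. h n m} k) \<le> int (of_bool (n \<le> N)) + int (cA {m. h (n - 1) m} k) \<and>
             int (of_bool (n \<le> N)) + int (cA {m. h (n - 1) m} k) \<le> int (cA {m. h n m} k) + 1"
      using col[OF n] k by blast
    then show ?thesis using n k unfolding v_def by auto
  qed
  have cfg: "(v, h) \<in> four_vertex_configs L M N"
    unfolding four_vertex_configs_def mem_Collect_eq case_prod_conv
  proof (intro conjI)
    show "\<forall>n m. v n m \<longrightarrow> 1 \<le> n \<and> n \<le> L \<and> m \<le> M" unfolding v_def by simp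
    show "\<forall>n m. h n m \<longrightarrow> n \<le> L \<and> 1 \<le> m \<and> m \<le> M"
    proof (intro allI impI)
      fix n m assume hm: "h n m"
      then have "m \<in> {1..M}" using hsub[of n] by blast
      then show "n \<le> L \<and> 1 \<le> m \<and> m \<le> M" using hm by (simp add: h_def)
    qed
    show "\<forall>n\<in>{1..L}. \<forall>m\<in>{1..M}. allowed_vertex (v n (m - 1)) (v n m) (h (n - 1) m) (h n m)"
    proof (intro ballI)
      fix n m assume n: "n \<in> {1..L}" and m: "m \<in> {1..M}"
      then have n1: "1 \<le> n" "n \<le> L" and m1: "1 \<le> m" "m \<le> M" by auto
      obtain m' where m': "m = Suc m'" using m1 by (cases m) auto
      have e1: "int (of_bool (v n m)) = int (of_bool (n \<le> N)) + int (cA {m. h (n - 1) m} m) - int (cA {m. h n m} m)"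
        by (rule vD[OF n1 m1(2)])
      have e0: "int (of_bool (v n m')) = int (of_bool (n \<le> N)) + int (cA {m. h (n - 1) m} m') - int (cA {m. h n m} m')"
        by (rule vD[OF n1]) (use m1 m' in simp)
      have dj: "\<not> (h (n - 1) m \<and> h n m)" using col[OF n1] by blast
      show "allowed_vertex (v n (m - 1)) (v n m) (h (n - 1) m) (h n m)"
        unfolding allowed_iff using e1 e0 dj m' by (simp add: cA_Suc)
    qed
    show "\<forall>n\<in>{1..L}. v n 0 = (n \<le> N)"
    proof
      fix n assume n: "n \<in> {1..L}"
      then have n1: "1 \<le> n" "n \<le> L" by auto
      have "cA {m. h (n - 1) m} 0 = 0" "cA {m. h n m} 0 = 0" using hge by (auto intro!: cA_0)
      then show "v n 0 = (n \<le> N)" using vD[OF n1, of 0] by (cases "v n 0") auto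
    qed
    show "\<forall>n\<in>{1..L}. v n M = (L - N + 1 \<le> n)"
    proof
      fix n assume n: "n \<in> {1..L}"
      then have n1: "1 \<le> n" "n \<le> L" by auto
      have "cA {m. h (n - 1) m} M = card {m. h (n - 1) m}" "cA {m. h n m} M = card {m. h n m}"
        using cA_big[OF hsub order_refl] by auto
      then have "int (of_bool (v n M)) = 1 - int (of_bool (n \<le> K))"
        using vD[OF n1, of M] col[OF n1] by simp
      then show "v n M = (L - N + 1 \<le> n)" unfolding L_def by (cases "v n M"; cases "n \<le> K") auto
    qed
    show "\<forall>m\<in>{1..M}. \<not> h 0 m \<and> \<not> h L m" using lst by (simp add: h_def hs_def)
  qed
  have "Psi L h = cs"
  proof (rule nth_equalityI)
    show "length (Psi L h) = length cs" using lc by simp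
    fix j assume "j < length (Psi L h)"
    then have j: "j < L" by simp
    have "Psi L h ! j = hl h (Suc j)" by (rule Psi_nth[OF j])
    also have "\<dots> = sorted_list_of_set (set (hs (Suc j)))" unfolding hl_def using hset[of "Suc j"] j by simp
    also have "\<dots> = hs (Suc j)"
      using inv[of "Suc j"] j by (simp add: sorted_list_of_set_sort_remdups strict_sorted_iff distinct_remdups_id sorted_sort_id)
    also have "\<dots> = cs ! j" by (simp add: hs_def)
    finally show "Psi L h ! j = cs ! j" .
  qed
  then show ?thesis using cfg unfolding L_def by blast
qed


lemma tele:
  assumes "1 \<le> a"
  shows "(\<Prod>k=1..T. real (a + k) / real (a + k - 1)) = real (a + T) / real a"
proof (induction T)
  case 0
  then show ?case using assms by simp
next
  case (Suc T)
  have "(\<Prod>k=1..Suc T. real (a + k) / real (a + k - 1)) = (\<Prod>k=1..T. real (a + k) / real (a + k - 1)) * (real (a + Suc T) / real (a + Suc T - 1))"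
    by (simp add: prod.nat_ivl_Suc')
  also have "\<dots> = real (a + T) / real a * (real (a + Suc T) / real (a + T))" using Suc by simp
  also have "\<dots> = real (a + Suc T) / real a"
  proof -
    have nz: "real (a + T) \<noteq> 0" using assms by simp
    show ?thesis using nz by (simp add: divide_simps)
  qed
  finally show ?case .
qed

definition Dp :: "nat \<Rightarrow> nat \<Rightarrow> nat \<Rightarrow> real" where
  "Dp N K T = (\<Prod>i=1..N. \<Prod>j=1..K. real (i + j + T - 1) / real (i + j - 1))"

lemma PL_Dp: "PL N K T = Dp N K T"
  unfolding PL_def Dp_def
proof (rule prod.cong[OF refl], rule prod.cong[OF refl])
  fix i j assume i: "i \<in> {1..N}" and j: "j \<in> {1..K}"
  have "(\<Prod>k=1..T. real (i + j + k - 1) / real (i + j + k - 2)) = (\<Prod>k=1..T. real ((i + j - 1) + k) / real ((i + j - 1) + k - 1))"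
    by (rule prod.cong[OF refl]) (use i j in \<open>auto simp: algebra_simps\<close>)
  also have "\<dots> = real (i + j - 1 + T) / real (i + j - 1)" by (rule tele) (use i j in auto)
  finally show "(\<Prod>k=1..T. real (i + j + k - 1) / real (i + j + k - 2)) = real (i + j + T - 1) / real (i + j - 1)"
    using i j by (simp add: algebra_simps)
qed

lemma fact_add_prod: "fact (a + K) = (fact a :: real) * (\<Prod>q=1..K. real (a + q))"
proof (induction K)
  case 0
  then show ?case by simp
next
  case (Suc K)
  have "fact (a + Suc K) = (fact (a + K) :: real) * real (a + Suc K)" by (simp add: algebra_simps)
  then show ?case using Suc by (simp add: prod.nat_ivl_Suc' algebra_simps)
qed

lemma target1_Dp:
  assumes "N < L" "L \<le> M"
  shows "(\<Prod>j=1..N. (fact (j - 1) * fact (M - N + j)) / (fact (L - N + j - 1) * fact (M - L + j) :: real))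
       = Dp N (L - N) (M - L + 1)"
  unfolding Dp_def
proof (rule prod.cong[OF refl])
  fix j assume j: "j \<in> {1..N}"
  define K where "K = L - N"
  have e1: "fact (M - N + j) = (fact (M - L + j) :: real) * (\<Prod>q=1..K. real (M - L + j + q))"
    using fact_add_prod[of "M - L + j" K] assms unfolding K_def by (simp add: algebra_simps)
  have e2: "fact (L - N + j - 1) = (fact (j - 1) :: real) * (\<Prod>q=1..K. real (j - 1 + q))"
    using fact_add_prod[of "j - 1" K] assms j unfolding K_def by (simp add: algebra_simps)
  have "(fact (j - 1) * fact (M - N + j)) / (fact (L - N + j - 1) * fact (M - L + j) :: real)
      = (\<Prod>q=1..K. real (M - L + j + q)) / (\<Prod>q=1..K. real (j - 1 + q))"
    unfolding e1 e2 by (simp add: field_simps)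
  also have "\<dots> = (\<Prod>q=1..K. real (M - L + j + q) / real (j - 1 + q))"
    by (simp add: prod_dividef)
  also have "\<dots> = (\<Prod>q=1..K. real (j + q + (M - L + 1) - 1) / real (j + q - 1))"
    by (rule prod.cong[OF refl]) (use j assms in \<open>auto simp: algebra_simps\<close>)
  finally show "(fact (j - 1) * fact (M - N + j)) / (fact (L - N + j - 1) * fact (M - L + j) :: real)
      = (\<Prod>q=1..L - N. real (j + q + (M - L + 1) - 1) / real (j + q - 1))" unfolding K_def .
qed


lemma prod_split_add:
  fixes a b :: nat
  shows "(\<Prod>k<a + b. f k) = (\<Prod>k<a. f k) * (\<Prod>p<b. f (a + p))"
  by (induction b) (simp_all add: mult.assoc)

lemma prod_fact_diff: "(\<Prod>k<i. real (i - k)) = fact i"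
proof (induction i)
  case 0
  then show ?case by simp
next
  case (Suc i)
  have "(\<Prod>k<Suc i. real (Suc i - k)) = real (Suc i) * (\<Prod>k<i. real (Suc i - Suc k))"
    by (subst prod.lessThan_Suc_shift) simp
  also have "(\<Prod>k<i. real (Suc i - Suc k)) = fact i" using Suc by simp
  finally show ?case by (simp add: algebra_simps)
qed

lemma fact_add_prod': "fact (a + K) = (fact a :: real) * (\<Prod>q=1..K. real (a + q))"
proof (induction K)
  case 0
  then show ?case by simp
next
  case (Suc K)
  have "fact (a + Suc K) = (fact (a + K) :: real) * real (a + Suc K)" by (simp add: algebra_simps)
  then show ?case using Suc by (simp add: prod.nat_ivl_Suc' algebra_simps)
qed

lemma Pv0_nth1: "i < N \<Longrightarrow> Pv N K M 0 [] ! i = 2 * int i - int N + 1"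
  by (simp add: Pv_def Uv_def nth_append)

lemma Pv0_nth2: "q < K \<Longrightarrow> Pv N K M 0 [] ! (N + q) = int M - int K + 2 + 2 * int q"
  by (simp add: Pv_def Uv_def Vv_def nth_append)

lemma Pv0_length: "length (Pv N K M 0 []) = N + K"
  by (simp add: Pv_def)

lemma Pv0_sorted:
  assumes "N + K \<le> M"
  shows "sorted_wrt (<) (Pv N K M 0 [])"
proof -
  have "sorted_wrt (<) (Uv N 0)" unfolding Uv_def by (auto simp: sorted_wrt_map sorted_wrt_iff_nth_less)
  moreover have "sorted_wrt (<) (Vv K M 0)" unfolding Vv_def by (auto simp: sorted_wrt_map sorted_wrt_iff_nth_less)
  moreover have "\<forall>s\<in>set (Uv N 0). \<forall>t\<in>set (Vv K M 0). s < t"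
    using assms unfolding Uv_def Vv_def by auto
  ultimately show ?thesis unfolding Pv_def by (simp add: sorted_wrt_append)
qed


lemma prod_rev_idx:
  fixes N :: nat
  shows "(\<Prod>k<N. f k) = (\<Prod>i\<in>{1..N}. f (N - i))"
  by (rule prod.reindex_bij_witness[where i="\<lambda>i. N - i" and j="\<lambda>k. N - k"]) (auto simp: diff_diff_cancel)

lemma prod_suc_idx:
  fixes K :: nat
  shows "(\<Prod>j\<in>{1..K}. f j) = (\<Prod>q<K. f (Suc q))"
  by (rule prod.reindex_bij_witness[where i="Suc" and j="\<lambda>j. j - 1"]) auto

lemma G_val:
  assumes NKM: "N + K \<le> M"
  shows "real (G (Pv N K M 0 [])) = Dp N K (M - (N + K) + 1)"
proof -
  let ?x = "Pv N K M 0 []"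
  define X where "X i = ?x ! i - int i" for i
  have Xa: "X i = int i - int N + 1" if "i < N" for i using that Pv0_nth1[OF that] by (simp add: X_def)
  have Xb: "X (N + q) = int M - int K - int N + 2 + int q" if "q < K" for q
    using Pv0_nth2[OF that] by (simp add: X_def)
  define Y where "Y i = (\<Prod>k<i. (of_int (X i - X k) :: real))" for i
  define P where "P q = (\<Prod>k<N. (real M - real K + 1 + real q - real k))" for q
  have G1: "real (G ?x) = (\<Prod>i<N + K. Y i) / (\<Prod>j<N + K. fact j)"
    using G_formula[OF Pv0_sorted[OF NKM]] unfolding Pv0_length Y_def X_def by simp
  have Y1: "Y i = fact i" if "i < N" for i
  proof -
    have "Y i = (\<Prod>k<i. real (i - k))"
      unfolding Y_def by (rule prod.cong[OF refl]) (use that Xa in \<open>auto simp: of_nat_diff\<close>)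
    then show ?thesis using prod_fact_diff[of i] by simp
  qed
  have Y2: "Y (N + q) = P q * fact q" if "q < K" for q
  proof -
    have "Y (N + q) = (\<Prod>k<N. (of_int (X (N + q) - X k) :: real)) * (\<Prod>p<q. (of_int (X (N + q) - X (N + p)) :: real))"
      unfolding Y_def by (rule prod_split_add)
    also have "(\<Prod>k<N. (of_int (X (N + q) - X k) :: real)) = P q"
      unfolding P_def by (rule prod.cong[OF refl]) (use that Xa Xb in auto)
    also have "(\<Prod>p<q. (of_int (X (N + q) - X (N + p)) :: real)) = (\<Prod>p<q. real (q - p))"
      by (rule prod.cong[OF refl]) (use that Xb in \<open>auto simp: of_nat_diff\<close>)
    also have "\<dots> = fact q" using prod_fact_diff[of q] by simp
    finally show ?thesis .
  qed
  have num: "(\<Prod>i<N + K. Y i) = (\<Prod>i<N. fact i) * (\<Prod>q<K. P q * fact q)"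
    unfolding prod_split_add using Y1 Y2 by simp
  have den: "(\<Prod>j<N + K. (fact j :: real)) = (\<Prod>i<N. fact i) * (\<Prod>q<K. fact (N + q))"
    by (rule prod_split_add)
  have nz: "(\<Prod>i<N. (fact i :: real)) \<noteq> 0" by simp
  have "real (G ?x) = (\<Prod>q<K. P q * fact q) / (\<Prod>q<K. fact (N + q))"
    unfolding G1 num den using nz by simp
  also have "\<dots> = (\<Prod>q<K. P q * fact q / fact (N + q))" by (simp add: prod_dividef)
  also have "\<dots> = (\<Prod>q<K. \<Prod>i\<in>{1..N}. real (i + Suc q + (M - (N + K) + 1) - 1) / real (i + Suc q - 1))"
  proof (rule prod.cong[OF refl])
    fix q assume q: "q \<in> {..<K}"
    have f: "fact (N + q) = (fact q :: real) * (\<Prod>i=1..N. real (q + i))"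
      using fact_add_prod'[of q N] by (simp add: add.commute)
    have Pq: "P q = (\<Prod>i\<in>{1..N}. real (i + Suc q + (M - (N + K) + 1) - 1))"
      unfolding P_def prod_rev_idx
      by (rule prod.cong[OF refl]) (use NKM in \<open>auto simp: of_nat_diff\<close>)
    have nzq: "(fact q :: real) \<noteq> 0" by simp
    have "P q * fact q / fact (N + q) = P q / (\<Prod>i=1..N. real (q + i))"
      unfolding f using nzq by simp
    also have "\<dots> = (\<Prod>i\<in>{1..N}. real (i + Suc q + (M - (N + K) + 1) - 1)) / (\<Prod>i\<in>{1..N}. real (i + Suc q - 1))"
      unfolding Pq by (simp add: add.commute)
    also have "\<dots> = (\<Prod>i\<in>{1..N}. real (i + Suc q + (M - (N + K) + 1) - 1) / real (i + Suc q - 1))"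
      by (simp add: prod_dividef)
    finally show "P q * fact q / fact (N + q) = (\<Prod>i\<in>{1..N}. real (i + Suc q + (M - (N + K) + 1) - 1) / real (i + Suc q - 1))" .
  qed
  also have "\<dots> = Dp N K (M - (N + K) + 1)"
  proof -
    have "Dp N K (M - (N + K) + 1) = (\<Prod>j\<in>{1..K}. \<Prod>i\<in>{1..N}. real (i + j + (M - (N + K) + 1) - 1) / real (i + j - 1))"
      unfolding Dp_def by (rule prod.swap)
    also have "\<dots> = (\<Prod>q<K. \<Prod>i\<in>{1..N}. real (i + Suc q + (M - (N + K) + 1) - 1) / real (i + Suc q - 1))"
      by (rule prod_suc_idx)
    finally show ?thesis by simp
  qed
  finally show ?thesis .
qed


theorem mainTheorem2:
  fixes L M N :: nat
  assumes "1 \<le> N" and "N < L" and "L \<le> M"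
  shows "real (Z4v L M N) =
           (\<Prod>j=1..N. (fact (j - 1) * fact (M - N + j)) /
                        (fact (L - N + j - 1) * fact (M - L + j) :: real))
       \<and> real (Z4v L M N) = PL N (L - N) (M - L + 1)"
proof -
  define K where "K = L - N"
  have LK: "L = N + K" using assms unfolding K_def by simp
  let ?C = "four_vertex_configs (N + K) M N"
  let ?f = "\<lambda>(v :: nat \<Rightarrow> nat \<Rightarrow> bool, h :: nat \<Rightarrow> nat \<Rightarrow> bool). Psi (N + K) h"
  have inj: "inj_on ?f ?C"
  proof (rule inj_onI)
    fix p q assume p: "p \<in> ?C" and q: "q \<in> ?C" and e: "?f p = ?f q"
    obtain v h where pv: "p = (v, h)" by (cases p)
    obtain v' h' where qv: "q = (v', h')" by (cases q)
    show "p = q" using Psi_inj[of v h N K M v' h'] p q e unfolding pv qv by simp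
  qed
  have img: "?f ` ?C = chainsR N K M (N + K) 0 []"
  proof
    show "?f ` ?C \<subseteq> chainsR N K M (N + K) 0 []"
    proof
      fix cs assume "cs \<in> ?f ` ?C"
      then obtain v h where "(v, h) \<in> ?C" "cs = Psi (N + K) h" by auto
      then show "cs \<in> chainsR N K M (N + K) 0 []" using Psi_chain by simp
    qed
    show "chainsR N K M (N + K) 0 [] \<subseteq> ?f ` ?C"
    proof
      fix cs assume "cs \<in> chainsR N K M (N + K) 0 []"
      from chain_cfg[OF this] obtain v h where "(v, h) \<in> ?C" "Psi (N + K) h = cs" by blast
      then show "cs \<in> ?f ` ?C" by force
    qed
  qed
  have "Z4v L M N = card ?C" unfolding Z4v_def LK ..
  also have "\<dots> = card (chainsR N K M (N + K) 0 [])"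
    using card_image[OF inj] img by simp
  also have "\<dots> = G (Pv N K M 0 [])"
    using CNT[of N K M 0 "[]" "N + K"] Pv0_length by simp
  finally have Z: "real (Z4v L M N) = real (G (Pv N K M 0 []))" by simp
  have NKM: "N + K \<le> M" using assms LK by simp
  have D: "real (Z4v L M N) = Dp N K (M - L + 1)"
    using Z G_val[OF NKM] LK by simp
  show ?thesis
    using D target1_Dp[OF assms(2,3)] PL_Dp[of N "L - N" "M - L + 1"] unfolding K_def by simp
qed


end
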